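(* Let $V$ be a function analytic in a disc $\{z:|z|<R\}$ and taking positive values on the interval $(0,R)$. Define $s(z)=\exp\left(\int\frac{dz}{V(z)}\right)$ and $b(z)=\exp\left(\int\frac{z\,dz}{V(z)}\right)$ (with arbitrary fixed antiderivatives), and $\tau(z)=z/s(z)$. Suppose $\tau(0)>0$ and that the numbers $$c_0=b(0),\qquad c_k=\frac{1}{(k+1)!}\left(\frac{d}{dz}\right)^k\Big(b'(\tau(z))\,(\tau(z))^{k+1}\Big)\Big|_{z=0},\quad k=1,2,\dots$$ are all non-negative. Then $V$ is the covariance of the power series distribution of the function $\omega$ defined by $\omega(y)=b(z)$ where $y=s(z)$ (i.e. $\omega=b\circ s^{-1}$).
   Context: For a power series $\omega(y)=\sum_k a_ky^k$ with non-negative coefficients and positive radius of convergence, the power series distribution (PSD) of $\omega$ with parameter $y>0$ is the law on $\{0,1,2,\dots\}$ given by $P\{\xi=k\}=a_ky^k/\omega(y)$. Its mean is $x(y)=y\omega'(y)/\omega(y)$ and its variance is $y\,x'(y)>0$, so $x(\cdot)$ has an inverse $y=f(x)$ on its range. The covariance of the PSD of $\omega$ is the function $V(x)=f(x)/f'(x)$, i.e. the variance expressed as a function of the mean $x$. Here $\tau(0)$ denotes the value at $0$ of the (analytically extended) function $z/s(z)$. *)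

theory Defs
  imports "HOL-Analysis.Analysis"
begin

definition ps_fun :: "(nat \<Rightarrow> real) \<Rightarrow> real \<Rightarrow> real" where
  "ps_fun a y = (\<Sum>k. a k * y ^ k)"

definition psd_mean :: "(nat \<Rightarrow> real) \<Rightarrow> real \<Rightarrow> real" where
  "psd_mean a y = y * deriv (ps_fun a) y / ps_fun a y"

definition psd_params :: "(nat \<Rightarrow> real) \<Rightarrow> real set" where
  "psd_params a = {y. 0 < y \<and> ereal y < conv_radius a}"

definition psd_cov :: "(nat \<Rightarrow> real) \<Rightarrow> real \<Rightarrow> real" where
  "psd_cov a x = (let f = inv_into (psd_params a) (psd_mean a) in f x / deriv f x)"

end

theory Submission
  imports Defs "HOL-Complex_Analysis.Complex_Analysis"
begin

lemma diffs_iter: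
  fixes c :: "nat \<Rightarrow> 'a::real_normed_field"
  shows "(diffs ^^ n) c k = (fact (k+n) / fact k) * c (k+n)"
proof (induction n arbitrary: k)
  case 0 show ?case by simp
next
  case (Suc n)
  have "(diffs ^^ Suc n) c k = of_nat (Suc k) * ((diffs^^n) c (Suc k))"
    by (simp add: diffs_def)
  also have "\<dots> = of_nat (Suc k) * (fact (Suc k + n) / fact (Suc k) * c (Suc k + n))"
    using Suc.IH by simp
  also have "\<dots> = fact (k + Suc n) / fact k * c (k + Suc n)"
    by (simp add: field_simps del: of_nat_Suc)
  finally show ?case .
qed

lemma conv_radius_diffs:
  fixes c :: "nat \<Rightarrow> 'a::{banach,real_normed_field}"
  shows "conv_radius (diffs c) \<ge> conv_radius c"
  using fps_conv_radius_deriv[of "Abs_fps c"]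
  by (simp add: fps_conv_radius_def fps_deriv_def diffs_def)

lemma conv_radius_diffs_iter:
  fixes c :: "nat \<Rightarrow> 'a::{banach,real_normed_field}"
  shows "conv_radius ((diffs ^^ n) c) \<ge> conv_radius c"
proof (induction n)
  case (Suc n)
  then show ?case using conv_radius_diffs[of "(diffs ^^ n) c"] by simp
qed simp

lemma diffs_iter_of_real:
  "(diffs ^^ n) (\<lambda>k. of_real (a k) :: 'a::{real_normed_field}) = (\<lambda>k. of_real ((diffs ^^ n) a k))"
  by (induction n) (simp_all add: diffs_of_real)

lemma higher_deriv_powser:
  fixes c :: "nat \<Rightarrow> complex"
  assumes "ereal (norm y) < conv_radius c"
  shows "(deriv ^^ n) (\<lambda>y. \<Sum>k. c k * y^k) y = (\<Sum>k. (diffs ^^ n) c k * y^k)"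
  using assms
proof (induction n arbitrary: c)
  case 0 then show ?case by simp
next
  case (Suc n)
  have "(deriv ^^ Suc n) (\<lambda>y. \<Sum>k. c k * y^k) y = (deriv ^^ n) (deriv (\<lambda>y. \<Sum>k. c k * y^k)) y"
    by (simp add: funpow_Suc_right del: funpow.simps)
  also have "eventually (\<lambda>z. z \<in> eball 0 (conv_radius c)) (nhds y)"
    using Suc.prems by (intro eventually_nhds_in_open) auto
  hence "eventually (\<lambda>z. deriv (\<lambda>y. \<Sum>k. c k * y^k) z = (\<Sum>k. diffs c k * z^k)) (nhds y)"
    by eventually_elim (auto intro!: DERIV_imp_deriv has_field_derivative_powser)
  hence "(deriv ^^ n) (deriv (\<lambda>y. \<Sum>k. c k * y^k)) y = (deriv ^^ n) (\<lambda>z. \<Sum>k. diffs c k * z^k) y"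
    by (intro higher_deriv_cong_ev refl)
  also have "\<dots> = (\<Sum>k. (diffs ^^ n) (diffs c) k * y^k)"
    using Suc.prems conv_radius_diffs[of c] by (intro Suc.IH) auto
  also have "(diffs ^^ n) (diffs c) = (diffs ^^ Suc n) c"
    by (simp add: funpow_Suc_right del: funpow.simps)
  finally show ?case .
qed

lemma pringsheim_aux:
  fixes a :: "nat \<Rightarrow> real" and \<rho> \<epsilon> :: real and F :: "complex \<Rightarrow> complex"
  assumes nn: "\<And>k. 0 \<le> a k" and rho: "conv_radius a = ereal \<rho>" and rpos: "\<rho> > 0" and epos: "\<epsilon> > 0"
    and holF: "F holomorphic_on ball (of_real \<rho>) \<epsilon>"
    and eq: "\<And>w. w \<in> ball 0 \<rho> \<inter> ball (of_real \<rho>) \<epsilon> \<Longrightarrow> F w = (\<Sum>k. of_real (a k) * w^k)"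
  shows False
proof -
  define c where "c = (\<lambda>k. complex_of_real (a k))"
  have crad: "conv_radius c = conv_radius a"
    using conv_radius_norm[of c] nn by (simp add: c_def)
  define \<eta> where "\<eta> = min (\<epsilon>/3) (\<rho>/2)"
  have eta: "\<eta> > 0" "3*\<eta> \<le> \<epsilon>" "2*\<eta> \<le> \<rho>" using epos rpos by (auto simp: \<eta>_def)
  define y0 where "y0 = \<rho> - \<eta>"
  define h where "h = 3*\<eta>/2"
  have y0pos: "y0 > 0" "y0 < \<rho>" using eta by (auto simp: y0_def)
  define P where "P = (\<lambda>w. \<Sum>k. c k * w^k)"
  define W where "W = ball 0 \<rho> \<inter> ball (complex_of_real \<rho>) \<epsilon>"
  have y0W: "complex_of_real y0 \<in> W"
  proof -
    have "norm (complex_of_real y0) < \<rho>" using y0pos by simp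
    moreover have "dist (complex_of_real \<rho>) (complex_of_real y0) < \<epsilon>"
      using eta by (simp add: dist_norm y0_def flip: of_real_diff)
    ultimately show ?thesis by (simp add: W_def)
  qed
  have "eventually (\<lambda>z. z \<in> W) (nhds (complex_of_real y0))"
    using y0W by (intro eventually_nhds_in_open) (auto simp: W_def)
  hence evFP: "eventually (\<lambda>z. F z = P z) (nhds (complex_of_real y0))"
    by eventually_elim (use eq in \<open>auto simp: W_def P_def c_def\<close>)
  define D where "D = (\<lambda>n. \<Sum>k. (diffs ^^ n) a k * y0^k)"
  have summD: "summable (\<lambda>k. (diffs ^^ n) a k * y0^k)" for n
  proof -
    have "ereal (norm y0) < conv_radius ((diffs ^^ n) a)"
    proof -
      have "ereal (norm y0) < ereal \<rho>" using y0pos by simp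
      also have "\<dots> \<le> conv_radius ((diffs ^^ n) a)" using conv_radius_diffs_iter[of a n] rho by simp
      finally show ?thesis .
    qed
    then show ?thesis by (rule summable_in_conv_radius)
  qed
  have derF: "(deriv ^^ n) F (complex_of_real y0) = complex_of_real (D n)" for n
  proof -
    have "(deriv ^^ n) F (complex_of_real y0) = (deriv ^^ n) P (complex_of_real y0)"
      by (rule higher_deriv_cong_ev[OF evFP refl])
    also have "\<dots> = (\<Sum>k. (diffs ^^ n) c k * (complex_of_real y0)^k)"
      unfolding P_def using crad rho y0pos by (intro higher_deriv_powser) auto
    also have "\<dots> = (\<Sum>k. complex_of_real ((diffs ^^ n) a k * y0^k))"
      by (simp add: c_def diffs_iter_of_real)
    also have "\<dots> = complex_of_real (D n)"
      unfolding D_def by (rule suminf_of_real[OF summD, symmetric])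
    finally show ?thesis .
  qed
  have "F holomorphic_on ball (complex_of_real y0) (2*\<eta>)"
  proof (rule holomorphic_on_subset[OF holF])
    show "ball (complex_of_real y0) (2*\<eta>) \<subseteq> ball (complex_of_real \<rho>) \<epsilon>"
    proof
      fix w assume "w \<in> ball (complex_of_real y0) (2*\<eta>)"
      hence "norm (w - complex_of_real y0) < 2*\<eta>" by (simp add: dist_norm norm_minus_commute)
      moreover have "norm (complex_of_real y0 - complex_of_real \<rho>) = \<eta>"
        using eta by (simp add: y0_def flip: of_real_diff)
      ultimately have "norm (w - complex_of_real \<rho>) < 3*\<eta>"
        using norm_triangle_ineq[of "w - complex_of_real y0" "complex_of_real y0 - complex_of_real \<rho>"] by simp
      thus "w \<in> ball (complex_of_real \<rho>) \<epsilon>" using eta by (simp add: dist_norm norm_minus_commute)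
    qed
  qed
  moreover have "complex_of_real (y0 + h) \<in> ball (complex_of_real y0) (2*\<eta>)"
    using eta by (simp add: h_def dist_norm flip: of_real_diff)
  ultimately have "(\<lambda>n. (deriv ^^ n) F (complex_of_real y0) / fact n * (complex_of_real (y0+h) - complex_of_real y0)^n)
      sums F (complex_of_real (y0+h))"
    by (rule holomorphic_power_series)
  hence S: "summable (\<lambda>n. complex_of_real (D n) / fact n * (complex_of_real h)^n)"
    by (simp add: derF sums_summable flip: of_real_diff)
  have E: "(\<lambda>n. complex_of_real (D n) / fact n * (complex_of_real h)^n) = (\<lambda>n. complex_of_real (D n / fact n * h^n))"
    by simp
  have sumT: "summable (\<lambda>n. D n / fact n * h^n)" using S unfolding E summable_complex_of_real .
  define Tot where "Tot = (\<Sum>n. D n / fact n * h^n)"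
  have Dnn: "D n \<ge> 0" for n
    unfolding D_def by (intro suminf_nonneg summD) (use nn y0pos in \<open>auto simp: diffs_iter\<close>)
  have hpos: "h > 0" using eta by (simp add: h_def)
  have Dn: "(\<Sum>i<N. a (i+j) * of_nat ((i+j) choose i) * y0^i) \<le> D j / fact j" for N j
  proof -
    have "(\<Sum>i<N. a (i+j) * of_nat ((i+j) choose i) * y0^i) = (\<Sum>i<N. (diffs ^^ j) a i * y0^i / fact j)"
    proof (rule sum.cong[OF refl])
      fix i
      have "of_nat ((i+j) choose i) = (fact (i+j) / (fact i * fact j) :: real)"
        using binomial_fact[of i "i+j"] by simp
      then show "a (i+j) * of_nat ((i+j) choose i) * y0^i = (diffs ^^ j) a i * y0^i / fact j"
        by (simp add: diffs_iter)
    qed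
    also have "\<dots> = (\<Sum>i<N. (diffs ^^ j) a i * y0^i) / fact j"
      by (simp add: sum_divide_distrib)
    also have "\<dots> \<le> D j / fact j"
      unfolding D_def
      by (intro divide_right_mono sum_le_suminf summD) (use nn y0pos in \<open>auto simp: diffs_iter\<close>)
    finally show ?thesis .
  qed
  have bound: "(\<Sum>m<N. a m * (y0+h)^m) \<le> Tot" for N
  proof -
    define g where "g = (\<lambda>i j. a (i+j) * of_nat ((i+j) choose i) * y0^i * h^j)"
    have g0: "0 \<le> g i j" for i j using nn y0pos hpos by (auto simp: g_def)
    have "(\<Sum>m<N. a m * (y0+h)^m) = (\<Sum>m<N. \<Sum>i\<le>m. g i (m - i))"
    proof (rule sum.cong[OF refl])
      fix m assume "m \<in> {..<N}"
      have "a m * (y0+h)^m = (\<Sum>i\<le>m. a m * (of_nat (m choose i) * y0^i * h^(m-i)))"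
        by (simp add: binomial_ring sum_distrib_left)
      also have "\<dots> = (\<Sum>i\<le>m. g i (m - i))"
        by (intro sum.cong refl) (auto simp: g_def)
      finally show "a m * (y0+h)^m = (\<Sum>i\<le>m. g i (m - i))" .
    qed
    also have "\<dots> = (\<Sum>(i,j)\<in>{(i,j). i+j < N}. g i j)"
      by (rule sum.triangle_reindex[symmetric])
    also have "\<dots> \<le> (\<Sum>(i,j)\<in>{..<N} \<times> {..<N}. g i j)"
      by (intro sum_mono2) (auto simp: g0)
    also have "\<dots> = (\<Sum>i<N. \<Sum>j<N. g i j)"
      by (rule sum.cartesian_product[symmetric])
    also have "\<dots> = (\<Sum>j<N. \<Sum>i<N. g i j)"
      by (rule sum.swap)
    also have "\<dots> = (\<Sum>j<N. (\<Sum>i<N. a (i+j) * of_nat ((i+j) choose i) * y0^i) * h^j)"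
    proof (rule sum.cong[OF refl])
      fix j
      show "(\<Sum>i<N. g i j) = (\<Sum>i<N. a (i+j) * of_nat ((i+j) choose i) * y0^i) * h^j"
        unfolding sum_distrib_right g_def by (rule sum.cong[OF refl]) simp
    qed
    also have "\<dots> \<le> (\<Sum>j<N. D j / fact j * h^j)"
      by (intro sum_mono mult_right_mono Dn) (use hpos in auto)
    also have "\<dots> \<le> Tot"
      unfolding Tot_def
      by (intro sum_le_suminf sumT finite_lessThan) (use Dnn hpos in auto)
    finally show ?thesis .
  qed
  have "summable (\<lambda>m. a m * (y0+h)^m)"
  proof (rule bounded_imp_summable)
    show "0 \<le> a n * (y0+h)^n" for n using nn y0pos hpos by auto
    show "(\<Sum>k\<le>n. a k * (y0+h)^k) \<le> Tot" for n
      using bound[of "Suc n"] by (simp add: lessThan_Suc_atMost)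
  qed
  hence "conv_radius a \<ge> norm (y0+h)" by (rule conv_radius_geI)
  moreover have "norm (y0+h) > \<rho>" using y0pos hpos eta by (simp add: y0_def h_def)
  ultimately show False using rho by simp
qed

lemma lagrange_expansion:
  fixes b \<sigma> :: "complex \<Rightarrow> complex" and r r1 :: real
  assumes holb: "b holomorphic_on ball 0 r1" and hols: "\<sigma> holomorphic_on ball 0 r1"
    and inj: "inj_on \<sigma> (ball 0 r1)" and s0: "\<sigma> 0 = 0" and r: "0 < r" "r < r1"
  shows "\<exists>\<epsilon>>0. \<forall>z. norm z < \<epsilon> \<longrightarrow>
     (\<lambda>n. contour_integral (circlepath 0 r) (\<lambda>\<zeta>. b \<zeta> * deriv \<sigma> \<zeta> / \<sigma> \<zeta> ^ Suc n) / (2*pi*\<i>) * \<sigma> z ^ n) sums b z"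
proof -
  define \<gamma> where "\<gamma> = circlepath 0 r"
  have pim: "path_image \<gamma> = sphere 0 r" using r by (simp add: \<gamma>_def path_image_circlepath)
  have sph: "sphere (0::complex) r \<subseteq> ball 0 r1" using r by auto
  have cb: "cball (0::complex) r \<subseteq> ball 0 r1" using r by auto
  have snz: "\<sigma> \<zeta> \<noteq> 0" if "\<zeta> \<in> sphere 0 r" for \<zeta>
  proof
    assume "\<sigma> \<zeta> = 0"
    hence "\<sigma> \<zeta> = \<sigma> 0" using s0 by simp
    moreover have "\<zeta> \<in> ball 0 r1" "0 \<in> ball (0::complex) r1" using that sph r by auto
    ultimately have "\<zeta> = 0" using inj by (auto dest: inj_onD)
    thus False using that r by simp
  qed
  have conts: "continuous_on (ball 0 r1) \<sigma>" by (rule holomorphic_on_imp_continuous_on[OF hols])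
  have contb: "continuous_on (ball 0 r1) b" by (rule holomorphic_on_imp_continuous_on[OF holb])
  have holds: "deriv \<sigma> holomorphic_on ball 0 r1" by (rule holomorphic_deriv[OF hols]) simp
  have contds: "continuous_on (ball 0 r1) (deriv \<sigma>)" by (rule holomorphic_on_imp_continuous_on[OF holds])
  have sphne: "sphere (0::complex) r \<noteq> {}" using r by simp
  obtain \<zeta>0 where \<zeta>0: "\<zeta>0 \<in> sphere 0 r" "\<forall>y\<in>sphere 0 r. norm (\<sigma> \<zeta>0) \<le> norm (\<sigma> y)"
  proof -
    have "continuous_on (sphere 0 r) (\<lambda>\<zeta>. norm (\<sigma> \<zeta>))"
      using continuous_on_subset[OF conts sph] by (intro continuous_intros)
    from continuous_attains_inf[OF compact_sphere sphne this] that show ?thesis by blast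
  qed
  define m where "m = norm (\<sigma> \<zeta>0)"
  have mpos: "m > 0" using snz[OF \<zeta>0(1)] by (simp add: m_def)
  have mle: "m \<le> norm (\<sigma> \<zeta>)" if "\<zeta> \<in> sphere 0 r" for \<zeta> using \<zeta>0 that by (simp add: m_def)
  obtain \<zeta>1 where \<zeta>1: "\<zeta>1 \<in> sphere 0 r" "\<forall>y\<in>sphere 0 r. norm (b y * deriv \<sigma> y) \<le> norm (b \<zeta>1 * deriv \<sigma> \<zeta>1)"
  proof -
    have "continuous_on (sphere 0 r) (\<lambda>\<zeta>. norm (b \<zeta> * deriv \<sigma> \<zeta>))"
      using continuous_on_subset[OF contb sph] continuous_on_subset[OF contds sph] by (intro continuous_intros)
    from continuous_attains_sup[OF compact_sphere sphne this] that show ?thesis by blast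
  qed
  define M0 where "M0 = norm (b \<zeta>1 * deriv \<sigma> \<zeta>1)"
  have M0le: "norm (b \<zeta> * deriv \<sigma> \<zeta>) \<le> M0" if "\<zeta> \<in> sphere 0 r" for \<zeta> using \<zeta>1 that by (simp add: M0_def)
  have "isCont \<sigma> 0"
    using conts r by (intro continuous_on_interior[OF conts]) auto
  then obtain \<delta> where \<delta>: "\<delta> > 0" "\<And>z. dist z 0 < \<delta> \<Longrightarrow> dist (\<sigma> z) (\<sigma> 0) < m/2"
    using mpos unfolding continuous_at_eps_delta by (metis half_gt_zero)
  define \<epsilon> where "\<epsilon> = min \<delta> r"
  have "\<forall>z. norm z < \<epsilon> \<longrightarrow>
     (\<lambda>n. contour_integral \<gamma> (\<lambda>\<zeta>. b \<zeta> * deriv \<sigma> \<zeta> / \<sigma> \<zeta> ^ Suc n) / (2*pi*\<i>) * \<sigma> z ^ n) sums b z"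
  proof (intro allI impI)
    fix z :: complex assume z: "norm z < \<epsilon>"
    define q where "q = \<sigma> z"
    have qm: "norm q < m/2" using \<delta>(2)[of z] z s0 by (simp add: q_def \<epsilon>_def dist_norm)
    have zr: "norm z < r" using z by (simp add: \<epsilon>_def)
    hence zb: "z \<in> ball 0 r1" using r by simp
    define f where "f = (\<lambda>n \<zeta>. b \<zeta> * deriv \<sigma> \<zeta> / \<sigma> \<zeta> ^ Suc n * q ^ n)"
    define M where "M = (\<lambda>n::nat. M0 / m * (1/2)^n)"
    have fb: "norm (f n \<zeta>) \<le> M n" if "\<zeta> \<in> sphere 0 r" for n \<zeta>
    proof -
      have "norm (f n \<zeta>) = norm (b \<zeta> * deriv \<sigma> \<zeta>) * norm q ^ n / norm (\<sigma> \<zeta>) ^ Suc n"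
        by (simp add: f_def norm_mult norm_divide norm_power)
      also have "\<dots> \<le> M0 * (m/2) ^ n / m ^ Suc n"
      proof (rule frac_le)
        show "0 \<le> M0 * (m / 2) ^ n" using mpos order_trans[OF norm_ge_zero M0le[OF that]] by simp
        show "norm (b \<zeta> * deriv \<sigma> \<zeta>) * norm q ^ n \<le> M0 * (m / 2) ^ n"
          by (intro mult_mono M0le that power_mono) (use qm order_trans[OF norm_ge_zero M0le[OF that]] in auto)
        show "0 < m ^ Suc n" using mpos by simp
        show "m ^ Suc n \<le> norm (\<sigma> \<zeta>) ^ Suc n" by (intro power_mono mle that) (use mpos in auto)
      qed
      also have "\<dots> = M n" using mpos by (simp add: M_def power_divide field_simps)
      finally show ?thesis .
    qed
    have sM: "summable M" unfolding M_def by (intro summable_mult summable_geometric) simp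
    have ul: "uniform_limit (sphere 0 r) (\<lambda>N \<zeta>. \<Sum>n<N. f n \<zeta>) (\<lambda>\<zeta>. \<Sum>n. f n \<zeta>) sequentially"
      by (rule Weierstrass_m_test[OF fb sM])
    have contf: "continuous_on (sphere 0 r) (f n)" for n
      unfolding f_def using continuous_on_subset[OF conts sph] continuous_on_subset[OF contb sph]
        continuous_on_subset[OF contds sph] snz
      by (intro continuous_intros) auto
    have intf: "f n contour_integrable_on \<gamma>" for n
      unfolding \<gamma>_def by (rule contour_integrable_continuous_circlepath) (use contf pim \<gamma>_def in simp)
    have intsum: "\<forall>\<^sub>F N in sequentially. (\<lambda>\<zeta>. \<Sum>n<N. f n \<zeta>) contour_integrable_on \<gamma>"
      by (intro always_eventually allI contour_integrable_sum) (auto intro: intf)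
    have lim: "(\<lambda>N. contour_integral \<gamma> (\<lambda>\<zeta>. \<Sum>n<N. f n \<zeta>)) \<longlonglongrightarrow> contour_integral \<gamma> (\<lambda>\<zeta>. \<Sum>n. f n \<zeta>)"
      unfolding \<gamma>_def by (rule contour_integral_uniform_limit_circlepath[OF intsum[unfolded \<gamma>_def] ul]) (use r in auto)
    define I where "I = (\<lambda>n. contour_integral \<gamma> (\<lambda>\<zeta>. b \<zeta> * deriv \<sigma> \<zeta> / \<sigma> \<zeta> ^ Suc n))"
    have intI: "(\<lambda>\<zeta>. b \<zeta> * deriv \<sigma> \<zeta> / \<sigma> \<zeta> ^ Suc n) contour_integrable_on \<gamma>" for n
    proof -
      have "continuous_on (sphere 0 r) (\<lambda>\<zeta>. b \<zeta> * deriv \<sigma> \<zeta> / \<sigma> \<zeta> ^ Suc n)"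
        using continuous_on_subset[OF conts sph] continuous_on_subset[OF contb sph]
          continuous_on_subset[OF contds sph] snz
        by (intro continuous_intros) auto
      thus ?thesis unfolding \<gamma>_def by (intro contour_integrable_continuous_circlepath) (use pim \<gamma>_def in simp)
    qed
    have "contour_integral \<gamma> (\<lambda>\<zeta>. \<Sum>n<N. f n \<zeta>) = (\<Sum>n<N. I n * q ^ n)" for N
    proof -
      have "contour_integral \<gamma> (\<lambda>\<zeta>. \<Sum>n<N. f n \<zeta>) = (\<Sum>n<N. contour_integral \<gamma> (f n))"
        by (rule contour_integral_sum) (auto intro: intf)
      also have "\<dots> = (\<Sum>n<N. I n * q ^ n)"
      proof (rule sum.cong[OF refl])
        fix n show "contour_integral \<gamma> (f n) = I n * q ^ n"
          unfolding f_def I_def by (rule contour_integral_rmul[OF intI])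
      qed
      finally show ?thesis .
    qed
    with lim have sums0: "(\<lambda>n. I n * q ^ n) sums contour_integral \<gamma> (\<lambda>\<zeta>. \<Sum>n. f n \<zeta>)"
      by (simp add: sums_def)
    have sums1: "(\<lambda>n. I n / (2*pi*\<i>) * q ^ n) sums (contour_integral \<gamma> (\<lambda>\<zeta>. \<Sum>n. f n \<zeta>) / (2*pi*\<i>))"
    proof -
      from sums_divide[OF sums0, of "2*pi*\<i>"] show ?thesis by (simp add: field_simps)
    qed
    define K where "K = (\<lambda>\<zeta>. b \<zeta> * deriv \<sigma> \<zeta> / (\<sigma> \<zeta> - q))"
    have fK: "(\<Sum>n. f n \<zeta>) = K \<zeta>" if "\<zeta> \<in> sphere 0 r" for \<zeta>
    proof -
      have sz: "\<sigma> \<zeta> \<noteq> 0" using snz that .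
      have "norm (q / \<sigma> \<zeta>) < 1"
        using qm mle[OF that] mpos sz by (simp add: norm_divide divide_less_eq)
      hence "(\<lambda>n. (q / \<sigma> \<zeta>) ^ n) sums (1 / (1 - q / \<sigma> \<zeta>))" by (rule geometric_sums)
      hence "(\<lambda>n. b \<zeta> * deriv \<sigma> \<zeta> / \<sigma> \<zeta> * (q / \<sigma> \<zeta>) ^ n) sums (b \<zeta> * deriv \<sigma> \<zeta> / \<sigma> \<zeta> * (1 / (1 - q / \<sigma> \<zeta>)))"
        by (rule sums_mult)
      moreover have "(\<lambda>n. b \<zeta> * deriv \<sigma> \<zeta> / \<sigma> \<zeta> * (q / \<sigma> \<zeta>) ^ n) = (\<lambda>n. f n \<zeta>)"
        by (simp add: f_def power_divide field_simps)
      moreover have "\<sigma> \<zeta> - q \<noteq> 0"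
        using qm mle[OF that] mpos by auto
      hence "b \<zeta> * deriv \<sigma> \<zeta> / \<sigma> \<zeta> * (1 / (1 - q / \<sigma> \<zeta>)) = K \<zeta>"
        using sz by (simp add: K_def field_simps)
      ultimately show ?thesis by (simp add: sums_iff)
    qed
    have "contour_integral \<gamma> (\<lambda>\<zeta>. \<Sum>n. f n \<zeta>) = contour_integral \<gamma> K"
      by (rule contour_integral_eq) (use fK pim in auto)
    also have "\<dots> = 2 * pi * \<i> * b z"
    proof -
      define Q where "Q = (\<lambda>\<zeta>. if \<zeta> = z then deriv \<sigma> z else (\<sigma> \<zeta> - \<sigma> z) / (\<zeta> - z))"
      have holQ: "Q holomorphic_on ball 0 r1"
        unfolding Q_def by (rule pole_lemma[OF hols]) (use zb in auto)
      have dnz: "deriv \<sigma> z \<noteq> 0"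
        using holomorphic_injective_imp_regular[OF hols _ inj zb] by simp
      have Qnz: "Q \<zeta> \<noteq> 0" if "\<zeta> \<in> ball 0 r1" for \<zeta>
      proof (cases "\<zeta> = z")
        case True thus ?thesis using dnz by (simp add: Q_def)
      next
        case False
        hence "\<sigma> \<zeta> \<noteq> \<sigma> z" using inj that zb by (auto dest: inj_onD)
        thus ?thesis using False by (simp add: Q_def)
      qed
      define k where "k = (\<lambda>\<zeta>. b \<zeta> * deriv \<sigma> \<zeta> / Q \<zeta>)"
      have holk: "k holomorphic_on ball 0 r1"
        unfolding k_def using holb holds holQ Qnz hols by (intro holomorphic_intros) auto
      have "((\<lambda>u. k u / (u - z)) has_contour_integral (2 * of_real pi * \<i> * k z)) \<gamma>"
        unfolding \<gamma>_def
        by (rule Cauchy_integral_circlepath)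
           (use continuous_on_subset[OF holomorphic_on_imp_continuous_on[OF holk] cb] holomorphic_on_subset[OF holk, of "ball 0 r"] r zr in \<open>auto simp: subset_ball\<close>)
      moreover have kz: "k z = b z" using dnz by (simp add: k_def Q_def)
      moreover have kK: "k u / (u - z) = K u" if "u \<in> path_image \<gamma>" for u
      proof -
        have u: "norm u = r" using that pim by simp
        hence uz: "u \<noteq> z" using zr by auto
        hence "\<sigma> u \<noteq> \<sigma> z" using inj u zb r by (auto dest: inj_onD)
        hence d1: "\<sigma> u - \<sigma> z \<noteq> 0" by simp
        have d2: "u - z \<noteq> 0" using uz by simp
        have "k u / (u - z) = b u * deriv \<sigma> u / ((\<sigma> u - \<sigma> z) / (u - z)) / (u - z)"
          using uz by (simp add: k_def Q_def)
        also have "\<dots> = b u * deriv \<sigma> u / (\<sigma> u - \<sigma> z)"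
          using d1 d2 by (simp add: divide_divide_eq_right)
        finally show ?thesis by (simp add: K_def q_def)
      qed
      ultimately have "(K has_contour_integral (2 * of_real pi * \<i> * b z)) \<gamma>"
        using has_contour_integral_eq[of "\<lambda>u. k u / (u - z)" "2 * of_real pi * \<i> * k z" \<gamma> K] kz kK by simp
      from contour_integral_unique[OF this] show ?thesis by simp
    qed
    finally have "contour_integral \<gamma> (\<lambda>\<zeta>. \<Sum>n. f n \<zeta>) / (2*pi*\<i>) = b z" by simp
    with sums1 show "(\<lambda>n. contour_integral \<gamma> (\<lambda>\<zeta>. b \<zeta> * deriv \<sigma> \<zeta> / \<sigma> \<zeta> ^ Suc n) / (2*pi*\<i>) * \<sigma> z ^ n) sums b z"
      by (simp add: I_def q_def)
  qed
  thus ?thesis using \<delta> r unfolding \<gamma>_def \<epsilon>_def by (intro exI[of _ "min \<delta> r"]) auto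
qed

lemma alg1: fixes s P B1 B S1 :: complex and N :: nat assumes "s \<noteq> 0" "P \<noteq> 0"
  shows "(B1 * P - (of_nat N * (S1 * (P / s))) * B) / P ^ Suc (Suc 0) = B1 / P - of_nat N * (B * S1 / (s * P))"
  using assms by (simp add: field_simps power2_eq_square)

lemma alg2: fixes x y :: complex and n :: nat assumes "n \<ge> 1"
  shows "inverse (of_nat n) * (x - (x - of_nat n * y)) = y"
  using assms by simp

lemma deriv_sigma:
  fixes \<tau> :: "complex \<Rightarrow> complex"
  assumes holt: "\<tau> holomorphic_on ball 0 r1" and tnz: "\<And>z. z \<in> ball 0 r1 \<Longrightarrow> \<tau> z \<noteq> 0"
    and z: "z \<in> ball 0 r1"
  shows "((\<lambda>z. z / \<tau> z) has_field_derivative ((\<tau> z - z * deriv \<tau> z) / (\<tau> z)^2)) (at z)"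
proof -
  have "(\<tau> has_field_derivative deriv \<tau> z) (at z)"
    using holt z by (intro holomorphic_derivI[of _ "ball 0 r1"]) auto
  then show ?thesis
    using tnz[OF z] by (auto intro!: derivative_eq_intros simp: power2_eq_square field_simps)
qed

lemma lagrange_coeff:
  fixes b \<tau> :: "complex \<Rightarrow> complex" and r r1 :: real and n :: nat
  assumes holb: "b holomorphic_on ball 0 r1" and holt: "\<tau> holomorphic_on ball 0 r1"
    and tnz: "\<And>z. z \<in> ball 0 r1 \<Longrightarrow> \<tau> z \<noteq> 0" and r: "0 < r" "r < r1" and n: "n \<ge> 1"
  shows "contour_integral (circlepath 0 r) (\<lambda>\<zeta>. b \<zeta> * deriv (\<lambda>z. z / \<tau> z) \<zeta> / (\<zeta> / \<tau> \<zeta>) ^ Suc n)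
         = 2 * pi * \<i> / fact n * (deriv ^^ (n - 1)) (\<lambda>z. deriv b z * \<tau> z ^ n) 0"
proof -
  define \<sigma> where "\<sigma> = (\<lambda>z. z / \<tau> z)"
  define \<gamma> where "\<gamma> = circlepath 0 r"
  define S where "S = ball (0::complex) r1 - {0}"
  have pim: "path_image \<gamma> \<subseteq> S" using r by (auto simp: \<gamma>_def path_image_circlepath S_def)
  have hols: "\<sigma> holomorphic_on ball 0 r1" unfolding \<sigma>_def using holt tnz by (intro holomorphic_intros) auto
  have snz: "\<sigma> z \<noteq> 0" if "z \<in> S" for z using that tnz by (auto simp: \<sigma>_def S_def)
  have derb: "(b has_field_derivative deriv b z) (at z)" if "z \<in> ball 0 r1" for z
    using holb that by (intro holomorphic_derivI[of _ "ball 0 r1"]) auto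
  have ders: "(\<sigma> has_field_derivative deriv \<sigma> z) (at z)" if "z \<in> ball 0 r1" for z
    using hols that by (intro holomorphic_derivI[of _ "ball 0 r1"]) auto
  define \<Phi>' where "\<Phi>' = (\<lambda>z. deriv b z / \<sigma> z ^ n - of_nat n * (b z * deriv \<sigma> z / \<sigma> z ^ Suc n))"
  have derPhi: "((\<lambda>z. b z / \<sigma> z ^ n) has_field_derivative \<Phi>' z) (at z within S)" if "z \<in> S" for z
  proof -
    have zb: "z \<in> ball 0 r1" using that by (simp add: S_def)
    have "((\<lambda>z. b z / \<sigma> z ^ n) has_field_derivative
           (deriv b z * \<sigma> z ^ n - (of_nat n * (deriv \<sigma> z * \<sigma> z ^ (n - Suc 0))) * b z) / ((\<sigma> z ^ n) ^ Suc (Suc 0))) (at z)"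
      by (rule DERIV_quotient[OF derb[OF zb] DERIV_power[OF ders[OF zb]]]) (use snz[OF that] in simp)
    also have "(deriv b z * \<sigma> z ^ n - (of_nat n * (deriv \<sigma> z * \<sigma> z ^ (n - Suc 0))) * b z) / ((\<sigma> z ^ n) ^ Suc (Suc 0)) = \<Phi>' z"
    proof -
      obtain m where nm: "n = Suc m" using n by (cases n) auto
      have sn: "\<sigma> z ^ (n - Suc 0) = \<sigma> z ^ n / \<sigma> z" using snz[OF that] unfolding nm by simp
      have sn2: "\<sigma> z ^ Suc n = \<sigma> z * \<sigma> z ^ n" by simp
      show ?thesis unfolding \<Phi>'_def sn sn2 by (rule alg1) (use snz[OF that] in auto)
    qed
    finally show ?thesis by (rule has_field_derivative_at_within)
  qed
  have H1: "(\<Phi>' has_contour_integral 0) \<gamma>"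
    by (rule Cauchy_theorem_primitive[OF derPhi]) (use pim in \<open>auto simp: \<gamma>_def\<close>)
  define f where "f = (\<lambda>z. deriv b z * \<tau> z ^ n)"
  have holdb: "deriv b holomorphic_on ball 0 r1" by (rule holomorphic_deriv[OF holb]) simp
  have holf: "f holomorphic_on ball 0 r1" unfolding f_def using holdb holt holb by (intro holomorphic_intros) auto
  have H2: "((\<lambda>u. f u / (u - 0) ^ Suc (n - 1)) has_contour_integral
            ((2 * pi * \<i>) / fact (n - 1) * (deriv ^^ (n - 1)) f 0)) \<gamma>"
    unfolding \<gamma>_def
    by (rule Cauchy_has_contour_integral_higher_derivative_circlepath)
       (use holomorphic_on_imp_continuous_on[OF holf] holomorphic_on_subset[OF holf] r
         in \<open>auto intro: continuous_on_subset simp: subset_ball\<close>)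
  have H3: "((\<lambda>u. deriv b u / \<sigma> u ^ n) has_contour_integral
            ((2 * pi * \<i>) / fact (n - 1) * (deriv ^^ (n - 1)) f 0)) \<gamma>"
  proof (rule has_contour_integral_eq[OF H2])
    fix u assume "u \<in> path_image \<gamma>"
    hence u: "u \<in> S" using pim by auto
    have "Suc (n - 1) = n" using n by simp
    thus "f u / (u - 0) ^ Suc (n - 1) = deriv b u / \<sigma> u ^ n"
      by (simp add: f_def \<sigma>_def power_divide)
  qed
  have H4: "((\<lambda>u. deriv b u / \<sigma> u ^ n - \<Phi>' u) has_contour_integral
            ((2 * pi * \<i>) / fact (n - 1) * (deriv ^^ (n - 1)) f 0 - 0)) \<gamma>"
    by (rule has_contour_integral_diff[OF H3 H1])
  have H5: "((\<lambda>u. inverse (of_nat n) * (deriv b u / \<sigma> u ^ n - \<Phi>' u)) has_contour_integral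
            (inverse (of_nat n) * ((2 * pi * \<i>) / fact (n - 1) * (deriv ^^ (n - 1)) f 0 - 0))) \<gamma>"
    by (rule has_contour_integral_lmul[OF H4])
  have H6: "((\<lambda>u. b u * deriv \<sigma> u / \<sigma> u ^ Suc n) has_contour_integral
            (inverse (of_nat n) * ((2 * pi * \<i>) / fact (n - 1) * (deriv ^^ (n - 1)) f 0 - 0))) \<gamma>"
  proof (rule has_contour_integral_eq[OF H5])
    fix u show "inverse (of_nat n) * (deriv b u / \<sigma> u ^ n - \<Phi>' u) = b u * deriv \<sigma> u / \<sigma> u ^ Suc n"
      unfolding \<Phi>'_def by (rule alg2[OF n])
  qed
  have "inverse (of_nat n) * ((2 * pi * \<i>) / fact (n - 1) * (deriv ^^ (n - 1)) f 0 - 0)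
        = 2 * pi * \<i> / fact n * (deriv ^^ (n - 1)) f 0"
  proof -
    obtain m where nm: "n = Suc m" using n by (cases n) auto
    show ?thesis unfolding nm by (simp add: field_simps del: of_nat_Suc)
  qed
  with contour_integral_unique[OF H6] show ?thesis by (simp add: \<sigma>_def \<gamma>_def f_def)
qed

lemma lagrange_coeff0:
  fixes b \<tau> :: "complex \<Rightarrow> complex" and r r1 :: real
  assumes holb: "b holomorphic_on ball 0 r1" and holt: "\<tau> holomorphic_on ball 0 r1"
    and tnz: "\<And>z. z \<in> ball 0 r1 \<Longrightarrow> \<tau> z \<noteq> 0" and r: "0 < r" "r < r1"
  shows "contour_integral (circlepath 0 r) (\<lambda>\<zeta>. b \<zeta> * deriv (\<lambda>z. z / \<tau> z) \<zeta> / (\<zeta> / \<tau> \<zeta>) ^ Suc 0)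
         = 2 * pi * \<i> * b 0"
proof -
  define \<gamma> where "\<gamma> = circlepath 0 r"
  have pim: "path_image \<gamma> = sphere 0 r" using r by (simp add: \<gamma>_def path_image_circlepath)
  have H1: "((\<lambda>u. b u / (u - 0)) has_contour_integral (2 * of_real pi * \<i> * b 0)) \<gamma>"
    unfolding \<gamma>_def
    by (rule Cauchy_integral_circlepath)
       (use holomorphic_on_imp_continuous_on[OF holb] holomorphic_on_subset[OF holb] r
         in \<open>auto intro: continuous_on_subset simp: subset_ball\<close>)
  have holdt: "deriv \<tau> holomorphic_on ball 0 r1" by (rule holomorphic_deriv[OF holt]) simp
  have H2: "((\<lambda>u. b u * deriv \<tau> u / \<tau> u) has_contour_integral 0) \<gamma>"
    unfolding \<gamma>_def
    by (rule Cauchy_theorem_disc_simple[of _ 0 r1])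
       (use holb holdt holt tnz r in \<open>auto intro!: holomorphic_intros simp: path_image_circlepath\<close>)
  have H3: "((\<lambda>u. b u / (u - 0) - b u * deriv \<tau> u / \<tau> u) has_contour_integral (2 * of_real pi * \<i> * b 0 - 0)) \<gamma>"
    by (rule has_contour_integral_diff[OF H1 H2])
  have H4: "((\<lambda>\<zeta>. b \<zeta> * deriv (\<lambda>z. z / \<tau> z) \<zeta> / (\<zeta> / \<tau> \<zeta>) ^ Suc 0) has_contour_integral (2 * of_real pi * \<i> * b 0 - 0)) \<gamma>"
  proof (rule has_contour_integral_eq[OF H3])
    fix u assume "u \<in> path_image \<gamma>"
    hence u: "norm u = r" using pim by simp
    hence ub: "u \<in> ball 0 r1" and u0: "u \<noteq> 0" using r by auto
    have dd: "deriv (\<lambda>z. z / \<tau> z) u = (\<tau> u - u * deriv \<tau> u) / (\<tau> u)^2"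
      by (rule DERIV_imp_deriv[OF deriv_sigma[OF holt tnz ub]])
    show "b u / (u - 0) - b u * deriv \<tau> u / \<tau> u = b u * deriv (\<lambda>z. z / \<tau> z) u / (u / \<tau> u) ^ Suc 0"
      unfolding dd using tnz[OF ub] u0 by (simp add: field_simps power2_eq_square)
  qed
  from contour_integral_unique[OF H4] show ?thesis by (simp add: \<gamma>_def)
qed

lemma powser_real_deriv:
  fixes a :: "nat \<Rightarrow> real"
  assumes "ereal \<bar>t\<bar> < conv_radius a"
  shows "((\<lambda>t. \<Sum>k. a k * t^k) has_field_derivative (\<Sum>k. diffs a k * t^k)) (at t)"
  using has_field_derivative_powser[of t a UNIV] assms by simp

lemma powser_real_deriv2:
  fixes a :: "nat \<Rightarrow> real"
  assumes "ereal \<bar>t\<bar> < conv_radius a"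
  shows "((\<lambda>t. \<Sum>k. diffs a k * t^k) has_field_derivative (\<Sum>k. diffs (diffs a) k * t^k)) (at t)"
proof -
  have "ereal \<bar>t\<bar> < conv_radius (diffs a)" using assms conv_radius_diffs_iter[of a 1]
    by (auto intro: less_le_trans)
  thus ?thesis by (rule powser_real_deriv)
qed

lemma mean_num_pos:
  fixes a :: "nat \<Rightarrow> real"
  assumes nn: "\<And>k. 0 \<le> a k" and a0: "a 0 > 0" and j: "j \<ge> 1" "a j > 0"
    and y: "0 < y" "ereal y < conv_radius a"
  shows "(1 * (\<Sum>k. diffs a k * y^k) + (\<Sum>k. diffs (diffs a) k * y^k) * y) * (\<Sum>k. a k * y^k)
          - (\<Sum>k. diffs a k * y^k) * (y * (\<Sum>k. diffs a k * y^k)) > 0"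
proof -
  define P where "P = (\<Sum>k. a k * y^k)"
  define P1 where "P1 = (\<Sum>k. diffs a k * y^k)"
  define P2 where "P2 = (\<Sum>k. diffs (diffs a) k * y^k)"
  have yr: "ereal (norm y) < conv_radius a" using y by simp
  have s0: "(\<lambda>k. a k * y^k) sums P" unfolding P_def by (intro summable_sums summable_in_conv_radius yr)
  have yr1: "ereal (norm y) < conv_radius (diffs a)"
    using yr conv_radius_diffs_iter[of a 1] by (auto intro: less_le_trans)
  have yr2: "ereal (norm y) < conv_radius (diffs (diffs a))"
    using yr conv_radius_diffs_iter[of a 2] by (auto intro: less_le_trans simp: numeral_2_eq_2)
  have sP1: "(\<lambda>k. diffs a k * y^k) sums P1" unfolding P1_def by (intro summable_sums summable_in_conv_radius yr1)
  have sP2: "(\<lambda>k. diffs (diffs a) k * y^k) sums P2" unfolding P2_def by (intro summable_sums summable_in_conv_radius yr2)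
  define g where "g = (\<lambda>k. real k * a k * y^k)"
  have s1: "g sums (y * P1)"
  proof -
    have "(\<lambda>k. y * (diffs a k * y^k)) sums (y * P1)" by (rule sums_mult[OF sP1])
    moreover have "(\<lambda>k. y * (diffs a k * y^k)) = (\<lambda>k. g (Suc k))"
      by (auto simp: g_def diffs_def)
    ultimately have "(\<lambda>k. g (Suc k)) sums (y * P1)" by simp
    hence "g sums (y * P1 + g 0)" using sums_Suc_iff[of g "y * P1"] by simp
    thus ?thesis by (simp add: g_def)
  qed
  define h where "h = (\<lambda>k. real k * (real k - 1) * a k * y^k)"
  have s2: "h sums (y^2 * P2)"
  proof -
    have "(\<lambda>k. y^2 * (diffs (diffs a) k * y^k)) sums (y^2 * P2)" by (rule sums_mult[OF sP2])
    moreover have "(\<lambda>k. y^2 * (diffs (diffs a) k * y^k)) = (\<lambda>k. h (Suc (Suc k)))"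
      by (auto simp: h_def diffs_def power2_eq_square algebra_simps)
    ultimately have X: "(\<lambda>k. h (Suc (Suc k))) sums (y^2 * P2)" by simp
    have A: "(\<lambda>k. h (Suc k)) sums (y^2 * P2 + h (Suc 0))"
      using sums_Suc_iff[of "\<lambda>k. h (Suc k)" "y^2 * P2"] X by simp
    have "h sums (y^2 * P2 + h (Suc 0) + h 0)"
      using sums_Suc_iff[of h "y^2 * P2 + h (Suc 0)"] A by simp
    thus ?thesis by (simp add: h_def)
  qed
  have Ppos: "P > 0"
  proof -
    have "(\<Sum>k\<in>{0}. a k * y^k) \<le> P"
      unfolding P_def by (rule sum_le_suminf) (use s0 nn y in \<open>auto simp: sums_iff\<close>)
    thus ?thesis using a0 by simp
  qed
  have M1pos: "y * P1 > 0"
  proof -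
    have "(\<Sum>k\<in>{j}. g k) \<le> suminf g"
      by (rule sum_le_suminf) (use s1 nn y in \<open>auto simp: sums_iff g_def\<close>)
    hence "(\<Sum>k\<in>{j}. g k) \<le> y * P1" using s1 by (simp add: sums_iff)
    moreover have "real j * a j * y ^ j > 0" using j y by simp
    ultimately show ?thesis by (simp add: g_def)
  qed
  define m where "m = y * P1 / P"
  have mpos: "m > 0" using M1pos Ppos by (simp add: m_def)
  define F where "F = (\<lambda>k. (real k - m)^2 * a k * y^k)"
  have "(\<lambda>k. (h k + g k) - 2 * m * g k + m^2 * (a k * y^k)) sums ((y^2 * P2 + y * P1) - 2 * m * (y * P1) + m^2 * P)"
    by (intro sums_add sums_diff sums_mult s0 s1 s2)
  moreover have "(\<lambda>k. (h k + g k) - 2 * m * g k + m^2 * (a k * y^k)) = F"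
    by (auto simp: F_def h_def g_def power2_eq_square algebra_simps)
  ultimately have sF: "F sums ((y^2 * P2 + y * P1) - 2 * m * (y * P1) + m^2 * P)" by simp
  have "F 0 \<le> (y^2 * P2 + y * P1) - 2 * m * (y * P1) + m^2 * P"
  proof -
    have "(\<Sum>k\<in>{0}. F k) \<le> suminf F"
      by (rule sum_le_suminf) (use sF nn y in \<open>auto simp: sums_iff F_def\<close>)
    thus ?thesis using sF by (simp add: sums_iff)
  qed
  moreover have "F 0 > 0" using mpos a0 by (simp add: F_def)
  ultimately have "(y^2 * P2 + y * P1) - 2 * m * (y * P1) + m^2 * P > 0" by linarith
  moreover have "(y^2 * P2 + y * P1) - 2 * m * (y * P1) + m^2 * P
      = y / P * ((1 * P1 + P2 * y) * P - P1 * (y * P1))"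
    using Ppos by (simp add: m_def field_simps power2_eq_square)
  ultimately have "y / P * ((1 * P1 + P2 * y) * P - P1 * (y * P1)) > 0" by simp
  moreover have "y / P > 0" using y Ppos by simp
  ultimately have "(1 * P1 + P2 * y) * P - P1 * (y * P1) > 0"
    by (rule zero_less_mult_pos)
  thus ?thesis by (simp add: P_def P1_def P2_def)
qed

lemma ps_fun_eq: "ps_fun a = (\<lambda>y. \<Sum>k. a k * y^k)"
  by (rule ext) (simp add: ps_fun_def)

lemma psd_mean_formula:
  fixes a :: "nat \<Rightarrow> real"
  assumes "0 < t" "ereal t < conv_radius a"
  shows "psd_mean a t = t * (\<Sum>k. diffs a k * t^k) / (\<Sum>k. a k * t^k)"
proof -
  have "deriv (ps_fun a) t = (\<Sum>k. diffs a k * t^k)"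
    unfolding ps_fun_eq by (rule DERIV_imp_deriv[OF powser_real_deriv]) (use assms in simp)
  thus ?thesis by (simp add: psd_mean_def ps_fun_def)
qed

lemma mean_deriv_pos:
  fixes a :: "nat \<Rightarrow> real"
  assumes nn: "\<And>k. 0 \<le> a k" and a0: "a 0 > 0" and j: "j \<ge> 1" "a j > 0"
    and y: "0 < y" "ereal y < conv_radius a"
  shows "\<exists>d. (psd_mean a has_field_derivative d) (at y) \<and> d > 0"
proof -
  define P where "P = (\<lambda>t. \<Sum>k. a k * t^k)"
  define P1 where "P1 = (\<lambda>t. \<Sum>k. diffs a k * t^k)"
  define P2 where "P2 = (\<lambda>t. \<Sum>k. diffs (diffs a) k * t^k)"
  obtain y' where y': "ereal y < ereal y'" "ereal y' < conv_radius a" using ereal_dense2[OF y(2)] by auto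
  define U where "U = {0<..<y'}"
  have yU: "y \<in> U" using y y' by (simp add: U_def)
  have Ur: "ereal \<bar>t\<bar> < conv_radius a" if "t \<in> U" for t
  proof -
    have "ereal \<bar>t\<bar> < ereal y'" using that by (simp add: U_def)
    thus ?thesis using y'(2) by (rule less_trans)
  qed
  have Ppos: "P y > 0"
  proof -
    have "(\<Sum>k\<in>{0}. a k * y^k) \<le> P y"
      unfolding P_def by (rule sum_le_suminf) (use nn y summable_in_conv_radius[of y a] in auto)
    thus ?thesis using a0 by simp
  qed
  have dP: "(P has_field_derivative P1 y) (at y)" unfolding P_def P1_def by (rule powser_real_deriv) (use y in simp)
  have dP1: "(P1 has_field_derivative P2 y) (at y)" unfolding P1_def P2_def by (rule powser_real_deriv2) (use y in simp)
  have d: "((\<lambda>t. t * P1 t / P t) has_field_derivative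
        ((1 * P1 y + P2 y * y) * P y - P1 y * (y * P1 y)) / (P y ^ Suc (Suc 0))) (at y)"
    by (rule DERIV_quotient[OF DERIV_mult[OF DERIV_ident dP1] dP]) (use Ppos in simp)
  have d': "(psd_mean a has_field_derivative
        ((1 * P1 y + P2 y * y) * P y - P1 y * (y * P1 y)) / (P y ^ Suc (Suc 0))) (at y)"
  proof (rule has_field_derivative_transform_within_open[OF d _ yU])
    show "open U" by (simp add: U_def)
    fix t assume "t \<in> U"
    thus "t * P1 t / P t = psd_mean a t"
      using Ur[of t] by (subst psd_mean_formula) (auto simp: U_def P_def P1_def)
  qed
  moreover have "((1 * P1 y + P2 y * y) * P y - P1 y * (y * P1 y)) / (P y ^ Suc (Suc 0)) > 0"
    using mean_num_pos[OF nn a0 j y] Ppos by (simp add: P_def P1_def P2_def)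
  ultimately show ?thesis by blast
qed

lemma psd_mean_inj:
  fixes a :: "nat \<Rightarrow> real"
  assumes nn: "\<And>k. 0 \<le> a k" and a0: "a 0 > 0" and j: "j \<ge> 1" "a j > 0"
  shows "inj_on (psd_mean a) (psd_params a)"
proof -
  have lt: "psd_mean a y1 < psd_mean a y2" if "y1 \<in> psd_params a" "y2 \<in> psd_params a" "y1 < y2" for y1 y2
  proof (rule DERIV_pos_imp_increasing[OF that(3)])
    fix x assume x: "y1 \<le> x" "x \<le> y2"
    have "0 < x" using that x by (auto simp: psd_params_def)
    moreover have "ereal x < conv_radius a"
    proof -
      have "ereal x \<le> ereal y2" using x by simp
      moreover have "ereal y2 < conv_radius a" using that(2) by (simp add: psd_params_def)
      ultimately show ?thesis by (rule le_less_trans)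
    qed
    ultimately show "\<exists>d. (psd_mean a has_field_derivative d) (at x) \<and> d > 0"
      by (rule mean_deriv_pos[OF nn a0 j])
  qed
  show ?thesis
  proof (rule inj_onI)
    fix x y assume "x \<in> psd_params a" "y \<in> psd_params a" "psd_mean a x = psd_mean a y"
    thus "x = y" using lt[of x y] lt[of y x] by (cases x y rule: linorder_cases) auto
  qed
qed

lemma islimpt_of_real_interval:
  assumes "a < x" "x < b"
  shows "complex_of_real x islimpt (complex_of_real ` {a<..<b})"
  unfolding islimpt_approachable
proof (intro allI impI)
  fix e :: real assume e: "e > 0"
  define d where "d = min e (b - x)"
  have m: "d \<le> b - x" "d \<le> e" "d > 0" using assms e by (auto simp: d_def)
  define x' where "x' = x + d / 2"
  have "x < x'" using m unfolding x'_def by linarith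
  moreover have "x' < b" using m unfolding x'_def by linarith
  moreover have "x' - x < e" using m unfolding x'_def by linarith
  ultimately have "x < x'" "x' < b" "x' - x < e" by auto
  thus "\<exists>y\<in>complex_of_real ` {a<..<b}. y \<noteq> complex_of_real x \<and> dist y (complex_of_real x) < e"
    using assms by (intro bexI[of _ "complex_of_real x'"]) (auto simp: dist_norm simp flip: of_real_diff)
qed

lemma real_ode_real:
  fixes u :: "real \<Rightarrow> complex" and v :: "real \<Rightarrow> real" and R L :: real
  assumes du: "\<And>t. 0 < t \<Longrightarrow> t < R \<Longrightarrow> (u has_vector_derivative (u t / of_real (v t))) (at t)"
    and unz: "\<And>t. 0 < t \<Longrightarrow> t < R \<Longrightarrow> u t \<noteq> 0"
    and vnz: "\<And>t. 0 < t \<Longrightarrow> t < R \<Longrightarrow> v t \<noteq> 0"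
    and lim: "((\<lambda>t. u t / of_real t) \<longlongrightarrow> of_real L) (at_right 0)" and L: "L \<noteq> 0" and R: "R > 0"
    and t: "0 < t" "t < R"
  shows "Im (u t) = 0"
proof -
  define X where "X = (\<lambda>t. Re (u t))"
  define Y where "Y = (\<lambda>t. Im (u t))"
  define q where "q = (\<lambda>t. Y t ^ 2 / (X t ^ 2 + Y t ^ 2))"
  have Npos: "X t ^ 2 + Y t ^ 2 > 0" if "0 < t" "t < R" for t
  proof -
    have "X t \<noteq> 0 \<or> Y t \<noteq> 0" using unz[OF that] by (auto simp: X_def Y_def complex_eq_iff)
    thus ?thesis by (auto simp: add_pos_nonneg add_nonneg_pos)
  qed
  have dq: "(q has_field_derivative 0) (at t within {0<..<R})" if "t \<in> {0<..<R}" for t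
  proof -
    have t0: "0 < t" "t < R" using that by auto
    have dX: "(X has_field_derivative X t / v t) (at t)"
      unfolding X_def using has_field_derivative_Re[OF du[OF t0]] by simp
    have dY: "(Y has_field_derivative Y t / v t) (at t)"
      unfolding Y_def using has_field_derivative_Im[OF du[OF t0]] by simp
    have d1: "((\<lambda>t. Y t ^ 2) has_field_derivative of_nat 2 * (Y t / v t * Y t ^ (2 - Suc 0))) (at t)"
      by (rule DERIV_power[OF dY])
    have d2: "((\<lambda>t. X t ^ 2) has_field_derivative of_nat 2 * (X t / v t * X t ^ (2 - Suc 0))) (at t)"
      by (rule DERIV_power[OF dX])
    have d3: "((\<lambda>t. X t ^ 2 + Y t ^ 2) has_field_derivative
       of_nat 2 * (X t / v t * X t ^ (2 - Suc 0)) + of_nat 2 * (Y t / v t * Y t ^ (2 - Suc 0))) (at t)"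
      by (rule DERIV_add[OF d2 d1])
    have d4: "(q has_field_derivative
       (of_nat 2 * (Y t / v t * Y t ^ (2 - Suc 0)) * (X t ^ 2 + Y t ^ 2) -
        (of_nat 2 * (X t / v t * X t ^ (2 - Suc 0)) + of_nat 2 * (Y t / v t * Y t ^ (2 - Suc 0))) * Y t ^ 2)
        / ((X t ^ 2 + Y t ^ 2) ^ Suc (Suc 0))) (at t)"
    proof -
      have Nnz: "X t ^ 2 + Y t ^ 2 \<noteq> 0" using Npos[OF t0] by linarith
      show ?thesis unfolding q_def by (rule DERIV_quotient[OF d1 d3]) (use Nnz in simp)
    qed
    have "(of_nat 2 * (Y t / v t * Y t ^ (2 - Suc 0)) * (X t ^ 2 + Y t ^ 2) -
        (of_nat 2 * (X t / v t * X t ^ (2 - Suc 0)) + of_nat 2 * (Y t / v t * Y t ^ (2 - Suc 0))) * Y t ^ 2) = 0"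
      using vnz[OF t0] by (simp add: field_simps power2_eq_square)
    with d4 have "(q has_field_derivative 0) (at t)" by simp
    thus ?thesis by (rule has_field_derivative_at_within)
  qed
  obtain c where c: "\<And>t. t \<in> {0<..<R} \<Longrightarrow> q t = c"
    using has_field_derivative_zero_constant[OF convex_real_interval(8) dq] by blast
  have ev: "eventually (\<lambda>t. q t = Im (u t / of_real t) ^ 2 / (Re (u t / of_real t) ^ 2 + Im (u t / of_real t) ^ 2)) (at_right 0)"
  proof -
    have "eventually (\<lambda>t::real. t > 0) (at_right 0)" by (simp add: eventually_at_right_less)
    thus ?thesis
    proof eventually_elim
      case (elim t)
      thus ?case by (simp add: q_def X_def Y_def power_divide field_simps)
    qed
  qed
  have "((\<lambda>t. Im (u t / of_real t) ^ 2 / (Re (u t / of_real t) ^ 2 + Im (u t / of_real t) ^ 2))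
        \<longlongrightarrow> Im (of_real L) ^ 2 / (Re (of_real L) ^ 2 + Im (of_real L) ^ 2)) (at_right 0)"
    by (intro tendsto_intros lim) (use L in simp)
  hence "(q \<longlongrightarrow> 0) (at_right 0)"
    using ev by (simp add: tendsto_cong)
  moreover have "eventually (\<lambda>t. q t = c) (at_right 0)"
  proof -
    have "eventually (\<lambda>t::real. t > 0 \<and> t < R) (at_right 0)"
      unfolding eventually_at_right_field by (intro exI[of _ R]) (use R in auto)
    thus ?thesis by eventually_elim (use c in auto)
  qed
  hence "(q \<longlongrightarrow> c) (at_right 0)" by (simp add: tendsto_cong)
  ultimately have "c = 0" using tendsto_unique[OF trivial_limit_at_right_real] by blast
  hence "q t = 0" using c t by auto
  moreover have "X t ^ 2 + Y t ^ 2 > 0" using Npos t by auto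
  ultimately have "Y t = 0" by (auto simp: q_def)
  thus ?thesis by (simp add: Y_def)
qed

lemma real_ode_pos:
  fixes S v :: "real \<Rightarrow> real" and R L :: real
  assumes dS: "\<And>t. 0 < t \<Longrightarrow> t < R \<Longrightarrow> (S has_field_derivative S t / v t) (at t)"
    and Snz: "\<And>t. 0 < t \<Longrightarrow> t < R \<Longrightarrow> S t \<noteq> 0"
    and lim: "((\<lambda>t. S t / t) \<longlongrightarrow> L) (at_right 0)" and L: "L > 0"
    and t: "0 < t" "t < R"
  shows "S t > 0"
proof (rule ccontr)
  assume neg: "\<not> S t > 0"
  hence St: "S t < 0" using Snz[OF t] by linarith
  have "eventually (\<lambda>t. S t / t > 0) (at_right 0)" using order_tendstoD(1)[OF lim L] .
  moreover have "eventually (\<lambda>x::real. x > 0 \<and> x < R) (at_right 0)"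
    unfolding eventually_at_right_field by (intro exI[of _ R]) (use t in auto)
  ultimately have "eventually (\<lambda>x. S x / x > 0 \<and> x > 0 \<and> x < R) (at_right 0)"
    by eventually_elim auto
  then obtain t1 where t1: "S t1 / t1 > 0" "t1 > 0" "t1 < R"
    using eventually_happens'[OF trivial_limit_at_right_real] by blast
  hence S1: "S t1 > 0" by (simp add: zero_less_divide_iff)
  have cont: "continuous_on {min t t1..max t t1} S"
  proof (intro continuous_at_imp_continuous_on ballI)
    fix x assume "x \<in> {min t t1..max t t1}"
    hence "0 < x" "x < R" using t t1 by auto
    thus "isCont S x" using dS DERIV_isCont by blast
  qed
  have "\<exists>x. min t t1 \<le> x \<and> x \<le> max t t1 \<and> S x = 0"
  proof (cases "t \<le> t1")
    case True
    thus ?thesis using IVT'[of S t 0 t1] cont St S1 by auto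
  next
    case False
    thus ?thesis using IVT2'[of S t 0 t1] cont St S1 by auto
  qed
  then obtain x where "min t t1 \<le> x" "x \<le> max t t1" "S x = 0" by blast
  moreover have "0 < x" "x < R" using calculation t t1 by auto
  ultimately show False using Snz by blast
qed

theorem theorem2:
  fixes V s b :: "complex \<Rightarrow> complex" and R \<tau>0 :: real and D :: "complex set"
  assumes "R > 0"
    and "V holomorphic_on ball 0 R"
    and "\<forall>x::real. 0 < x \<and> x < R \<longrightarrow> V (of_real x) \<in> \<real> \<and> 0 < Re (V (of_real x))"
    and "open D" and "D \<subseteq> ball 0 R" and "of_real ` {0..<R} \<subseteq> D"
    and "\<forall>z\<in>D - {0}. V z \<noteq> 0 \<and> s z \<noteq> 0 \<and> (s has_field_derivative s z / V z) (at z)"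
    and "b holomorphic_on D"
    and "\<forall>z\<in>D. b z \<noteq> 0"
    and "\<forall>z\<in>D - {0}. (b has_field_derivative b z * z / V z) (at z)"
    and "\<tau>0 > 0" and "((\<lambda>z. z / s z) \<longlongrightarrow> complex_of_real \<tau>0) (at 0)"
    and "b 0 \<in> \<real> \<and> 0 \<le> Re (b 0)"
    and "\<forall>k\<ge>1. let c = (deriv ^^ k) (\<lambda>z. deriv b z * (if z = 0 then complex_of_real \<tau>0 else z / s z) ^ (k + 1)) 0
                          / fact (k + 1)
               in c \<in> \<real> \<and> 0 \<le> Re c"
  shows "\<exists>a :: nat \<Rightarrow> real. (\<forall>k. 0 \<le> a k) \<and> conv_radius a > 0 \<and>
           (\<exists>\<epsilon>>0. \<forall>z. z \<noteq> 0 \<and> norm z < \<epsilon> \<longrightarrow> b z = (\<Sum>k. complex_of_real (a k) * s z ^ k)) \<and>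
           (\<forall>x::real. 0 < x \<and> x < R \<longrightarrow>
               x \<in> psd_mean a ` psd_params a \<and> Re (V (of_real x)) = psd_cov a x)"
proof -
  note R0 = assms(1) and Vhol = assms(2) and Vpos = assms(3) and Dopen = assms(4) and DR = assms(5)
    and D0R = assms(6) and sD = assms(7) and bhol = assms(8) and bnz = assms(9) and bD = assms(10)
    and t0pos = assms(11) and tlim = assms(12) and b0 = assms(13) and ck = assms(14)
  have D0: "0 \<in> D" using D0R R0 by force
  have sder: "(s has_field_derivative s z / V z) (at z)" if "z \<in> D - {0}" for z using sD that by blast
  have snz: "s z \<noteq> 0" if "z \<in> D - {0}" for z using sD that by blast
  have Vnz: "V z \<noteq> 0" if "z \<in> D - {0}" for z using sD that by blast
  have bder: "(b has_field_derivative b z * z / V z) (at z)" if "z \<in> D - {0}" for z using bD that by blast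
  have openD0: "open (D - {0})" using Dopen by auto
  have shol: "s holomorphic_on D - {0}"
    using openD0 sder by (auto simp: holomorphic_on_open)
  have zshol: "(\<lambda>z. z / s z) holomorphic_on D - {0}"
    using shol snz by (intro holomorphic_intros) auto
  define \<tau>t where "\<tau>t = (\<lambda>z. if z = 0 then complex_of_real \<tau>0 else z / s z)"
  have thol: "\<tau>t holomorphic_on D"
    unfolding \<tau>t_def by (rule removable_singularity[OF zshol Dopen tlim])
  have tcont: "isCont \<tau>t 0"
    using holomorphic_on_imp_continuous_on[OF thol] Dopen D0 by (simp add: continuous_on_eq_continuous_at)
  have t00: "\<tau>t 0 = of_real \<tau>0" by (simp add: \<tau>t_def)
  obtain d1 where d1: "d1 > 0" "\<And>z. dist z 0 < d1 \<Longrightarrow> dist (\<tau>t z) (\<tau>t 0) < \<tau>0"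
    using tcont t0pos unfolding continuous_at_eps_delta by blast
  obtain d2 where d2: "d2 > 0" "ball 0 d2 \<subseteq> D" using Dopen D0 open_contains_ball_eq by blast
  define r0 where "r0 = min d1 d2"
  have r0: "r0 > 0" "ball 0 r0 \<subseteq> D" using d1 d2 by (auto simp: r0_def)
  have tnz0: "\<tau>t z \<noteq> 0" if "z \<in> ball 0 r0" for z
  proof
    assume "\<tau>t z = 0"
    moreover have "dist (\<tau>t z) (\<tau>t 0) < \<tau>0" using d1(2)[of z] that by (simp add: r0_def dist_commute)
    ultimately show False using t0pos by (simp add: t00 dist_norm)
  qed
  define \<sigma> where "\<sigma> = (\<lambda>z. z / \<tau>t z)"
  have thol0: "\<tau>t holomorphic_on ball 0 r0" using holomorphic_on_subset[OF thol r0(2)] .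
  have sighol: "\<sigma> holomorphic_on ball 0 r0" unfolding \<sigma>_def using thol0 tnz0 by (intro holomorphic_intros) auto
  have sig0: "\<sigma> 0 = 0" by (simp add: \<sigma>_def)
  have dsig0: "deriv \<sigma> 0 = 1 / of_real \<tau>0"
  proof -
    have z0: "0 \<in> ball (0::complex) r0" using r0 by simp
    have "deriv \<sigma> 0 = (\<tau>t 0 - 0 * deriv \<tau>t 0) / (\<tau>t 0)^2"
      unfolding \<sigma>_def by (rule DERIV_imp_deriv[OF deriv_sigma[OF thol0 tnz0 z0]])
    also have "\<dots> = 1 / of_real \<tau>0" using t0pos by (simp add: t00 power2_eq_square)
    finally show ?thesis .
  qed
  have z0: "0 \<in> ball (0::complex) r0" using r0 by simp
  have dnz: "deriv \<sigma> 0 \<noteq> 0" using dsig0 t0pos by simp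
  obtain r1 where r1: "r1 > 0" "ball (0::complex) r1 \<subseteq> ball 0 r0" "inj_on \<sigma> (ball 0 r1)"
  proof (rule has_complex_derivative_locally_injective[OF sighol z0 open_ball dnz])
    fix r assume "0 < r" "ball (0::complex) r \<subseteq> ball 0 r0" "inj_on \<sigma> (ball 0 r)"
    then show thesis by (rule that)
  qed
  have r1D: "ball 0 r1 \<subseteq> D" using r1 r0 by auto
  have bhol1: "b holomorphic_on ball 0 r1" using holomorphic_on_subset[OF bhol r1D] .
  have thol1: "\<tau>t holomorphic_on ball 0 r1" using holomorphic_on_subset[OF thol r1D] .
  have tnz1: "\<tau>t z \<noteq> 0" if "z \<in> ball 0 r1" for z using tnz0 r1 that by auto
  have sighol1: "\<sigma> holomorphic_on ball 0 r1" using holomorphic_on_subset[OF sighol r1(2)] .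
  have sig_eq: "\<sigma> z = s z" if "z \<in> D" "z \<noteq> 0" for z
    using that snz[of z] by (simp add: \<sigma>_def \<tau>t_def)
  define r where "r = r1 / 2"
  have r: "0 < r" "r < r1" using r1 by (auto simp: r_def)
  define A where "A = (\<lambda>n. contour_integral (circlepath 0 r) (\<lambda>\<zeta>. b \<zeta> * deriv \<sigma> \<zeta> / \<sigma> \<zeta> ^ Suc n) / (2*pi*\<i>))"
  obtain \<epsilon> where eps: "\<epsilon> > 0" "\<And>z. norm z < \<epsilon> \<Longrightarrow> (\<lambda>n. A n * \<sigma> z ^ n) sums b z"
    using lagrange_expansion[OF bhol1 sighol1 r1(3) sig0 r] unfolding A_def by blast
  have A0: "A 0 = b 0"
  proof -
    have "contour_integral (circlepath 0 r) (\<lambda>\<zeta>. b \<zeta> * deriv (\<lambda>z. z / \<tau>t z) \<zeta> / (\<zeta> / \<tau>t \<zeta>) ^ Suc 0)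
         = 2 * pi * \<i> * b 0" by (rule lagrange_coeff0[OF bhol1 thol1 tnz1 r])
    thus ?thesis unfolding A_def \<sigma>_def by simp
  qed
  have An: "A n = (deriv ^^ (n - 1)) (\<lambda>z. deriv b z * \<tau>t z ^ n) 0 / fact n" if n: "n \<ge> 1" for n
  proof -
    have "contour_integral (circlepath 0 r) (\<lambda>\<zeta>. b \<zeta> * deriv (\<lambda>z. z / \<tau>t z) \<zeta> / (\<zeta> / \<tau>t \<zeta>) ^ Suc n)
         = 2 * pi * \<i> / fact n * (deriv ^^ (n - 1)) (\<lambda>z. deriv b z * \<tau>t z ^ n) 0"
      by (rule lagrange_coeff[OF bhol1 thol1 tnz1 r n])
    thus ?thesis unfolding A_def \<sigma>_def by simp
  qed
  have db_eq: "deriv b z = b z * (\<tau>t z - z * deriv \<tau>t z) / \<tau>t z" if z: "z \<in> ball 0 r1" "z \<noteq> 0" for z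
  proof -
    have zD: "z \<in> D - {0}" using z r1D by auto
    have e1: "deriv b z = b z * z / V z" using DERIV_imp_deriv[OF bder[OF zD]] .
    have ds1: "(\<sigma> has_field_derivative s z / V z) (at z)"
    proof (rule has_field_derivative_transform_within_open[OF sder[OF zD] openD0])
      show "z \<in> D - {0}" using zD .
      fix w assume "w \<in> D - {0}" thus "s w = \<sigma> w" using sig_eq by auto
    qed
    have ds2: "(\<sigma> has_field_derivative (\<tau>t z - z * deriv \<tau>t z) / (\<tau>t z)^2) (at z)"
      unfolding \<sigma>_def by (rule deriv_sigma[OF thol1 tnz1 z(1)])
    have e2: "s z / V z = (\<tau>t z - z * deriv \<tau>t z) / (\<tau>t z)^2" using DERIV_unique[OF ds1 ds2] .
    have e3: "\<tau>t z = z / s z" using z by (simp add: \<tau>t_def)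
    have "b z * z / V z = b z * (z / s z) * (s z / V z)" using snz[OF zD] by simp
    also have "\<dots> = b z * \<tau>t z * ((\<tau>t z - z * deriv \<tau>t z) / (\<tau>t z)^2)" by (simp add: e2 e3)
    also have "\<dots> = b z * (\<tau>t z - z * deriv \<tau>t z) / \<tau>t z" using tnz1[OF z(1)] by (simp add: power2_eq_square)
    finally show ?thesis using e1 by simp
  qed
  have db0: "deriv b 0 = b 0"
  proof -
    define G where "G = (\<lambda>z. b z * (\<tau>t z - z * deriv \<tau>t z) / \<tau>t z)"
    have r10: "0 \<in> ball (0::complex) r1" using r1 by simp
    have dthol: "deriv \<tau>t holomorphic_on ball 0 r1" by (rule holomorphic_deriv[OF thol1]) simp
    have c1: "isCont b 0" using holomorphic_on_imp_continuous_on[OF bhol1] r10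
      by (simp add: continuous_on_eq_continuous_at)
    have c2: "isCont \<tau>t 0" by (rule tcont)
    have c3: "isCont (deriv \<tau>t) 0" using holomorphic_on_imp_continuous_on[OF dthol] r10
      by (simp add: continuous_on_eq_continuous_at)
    have "isCont G 0" unfolding G_def using c1 c2 c3 tnz1[OF r10] by (intro continuous_intros) auto
    hence l1: "(G \<longlongrightarrow> G 0) (at 0)" by (simp add: isCont_def)
    have G0: "G 0 = b 0" using t0pos by (simp add: G_def t00)
    have ev: "eventually (\<lambda>z. G z = deriv b z) (at 0)"
      unfolding eventually_at using r1 db_eq by (intro exI[of _ r1]) (auto simp: G_def dist_norm)
    have "(deriv b \<longlongrightarrow> b 0) (at 0)" using l1 G0 tendsto_cong[OF ev] by simp
    moreover have "isCont (deriv b) 0"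
      using holomorphic_on_imp_continuous_on[OF holomorphic_deriv[OF bhol Dopen]] Dopen D0
      by (simp add: continuous_on_eq_continuous_at)
    hence "(deriv b \<longlongrightarrow> deriv b 0) (at 0)" by (simp add: isCont_def)
    ultimately show ?thesis using tendsto_unique[OF at_neq_bot] by blast
  qed
  define a where "a = (\<lambda>k. Re (A k))"
  have Areal: "A k = of_real (a k) \<and> a k \<ge> 0" for k
  proof (cases k)
    case 0
    thus ?thesis using b0 by (simp add: a_def A0)
  next
    case (Suc m)
    show ?thesis
    proof (cases m)
      case 0
      have "A k = b 0 * of_real \<tau>0" using An[of 1] Suc 0 db0 by (simp add: t00)
      thus ?thesis using b0 t0pos by (simp add: a_def)
    next
      case (Suc m')
      hence m1: "m \<ge> 1" by simp
      have "let c = (deriv ^^ m) (\<lambda>z. deriv b z * (if z = 0 then complex_of_real \<tau>0 else z / s z) ^ (m + 1)) 0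
                          / fact (m + 1) in c \<in> \<real> \<and> 0 \<le> Re c" using ck[rule_format, OF m1] .
      moreover have "A k = (deriv ^^ m) (\<lambda>z. deriv b z * (if z = 0 then complex_of_real \<tau>0 else z / s z) ^ (m + 1)) 0
                          / fact (m + 1)"
        using An[of k] \<open>k = Suc m\<close> by (simp add: \<tau>t_def)
      ultimately show ?thesis by (simp add: Let_def a_def)
    qed
  qed
  have nn: "\<And>k. 0 \<le> a k" using Areal by blast
  define \<epsilon>' where "\<epsilon>' = min \<epsilon> r1"
  have eps': "\<epsilon>' > 0" "\<epsilon>' \<le> r1" "\<epsilon>' \<le> \<epsilon>" using eps r1 by (auto simp: \<epsilon>'_def)
  have expand: "(\<lambda>n. complex_of_real (a n) * s z ^ n) sums b z" if z: "z \<noteq> 0" "norm z < \<epsilon>'" for z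
  proof -
    have zD: "z \<in> D" using z eps' r1D by auto
    have "(\<lambda>n. A n * \<sigma> z ^ n) sums b z" using eps(2)[of z] z eps' by simp
    moreover have "(\<lambda>n. A n * \<sigma> z ^ n) = (\<lambda>n. complex_of_real (a n) * s z ^ n)"
      using Areal sig_eq[OF zD z(1)] by auto
    ultimately show ?thesis by simp
  qed
  define c where "c = (\<lambda>k. complex_of_real (a k))"
  define \<rho> where "\<rho> = conv_radius a"
  have crc: "conv_radius c = \<rho>"
    using conv_radius_norm[of c] nn by (simp add: c_def \<rho>_def)
  have crpos: "\<rho> > 0"
  proof -
    define z0 where "z0 = complex_of_real (\<epsilon>' / 2)"
    have z0: "z0 \<noteq> 0" "norm z0 < \<epsilon>'" using eps' by (auto simp: z0_def)
    have z0D: "z0 \<in> D - {0}" using z0 eps' r1D by auto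
    have "summable (\<lambda>n. c n * s z0 ^ n)" using expand[OF z0] by (simp add: c_def sums_summable)
    hence "conv_radius c \<ge> norm (s z0)" by (rule conv_radius_geI)
    moreover have "norm (s z0) > 0" using snz[OF z0D] by simp
    hence "ereal 0 < ereal (norm (s z0))" by simp
    ultimately show ?thesis using crc by (metis less_le_trans zero_ereal_def)
  qed
  have part3: "\<exists>\<epsilon>>0. \<forall>z. z \<noteq> 0 \<and> norm z < \<epsilon> \<longrightarrow> b z = (\<Sum>k. complex_of_real (a k) * s z ^ k)"
    using expand eps' by (intro exI[of _ \<epsilon>']) (auto simp: sums_iff)
  have Dreal: "complex_of_real t \<in> D - {0}" if "0 < t" "t < R" for t
  proof -
    have "complex_of_real t \<in> complex_of_real ` {0..<R}" using that by simp
    hence "complex_of_real t \<in> D" using D0R by (rule subsetD[rotated])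
    thus ?thesis using that by simp
  qed
  define Vr where "Vr = (\<lambda>t. Re (V (complex_of_real t)))"
  have VVr: "V (complex_of_real t) = complex_of_real (Vr t)" if "0 < t" "t < R" for t
    using Vpos that by (simp add: Vr_def)
  have Vrpos: "Vr t > 0" if "0 < t" "t < R" for t
    using Vpos that by (simp add: Vr_def)
  have du: "((\<lambda>t. s (complex_of_real t)) has_vector_derivative
              (s (complex_of_real t) / complex_of_real (Vr t))) (at t)" if "0 < t" "t < R" for t
    using has_vector_derivative_real_field[OF sder[OF Dreal[OF that]]] VVr[OF that] by simp
  have lim_s: "((\<lambda>t. s (complex_of_real t) / complex_of_real t) \<longlongrightarrow> complex_of_real (1 / \<tau>0)) (at_right 0)"
  proof -
    have "((\<lambda>t::real. complex_of_real t) \<longlongrightarrow> complex_of_real 0) (at 0)"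
      by (rule tendsto_of_real[OF tendsto_ident_at])
    hence "((\<lambda>t::real. complex_of_real t) \<longlongrightarrow> 0) (at 0)" by simp
    hence "((\<lambda>t::real. \<tau>t (complex_of_real t)) \<longlongrightarrow> \<tau>t 0) (at 0)"
      by (rule isCont_tendsto_compose[OF tcont])
    hence "((\<lambda>t::real. 1 / \<tau>t (complex_of_real t)) \<longlongrightarrow> 1 / \<tau>t 0) (at 0)"
      by (rule tendsto_divide[OF tendsto_const]) (use t0pos in \<open>simp add: t00\<close>)
    hence "((\<lambda>t::real. 1 / \<tau>t (complex_of_real t)) \<longlongrightarrow> 1 / \<tau>t 0) (at_right 0)"
      by (rule Lim_at_imp_Lim_at_within)
    hence l: "((\<lambda>t::real. 1 / \<tau>t (complex_of_real t)) \<longlongrightarrow> complex_of_real (1 / \<tau>0)) (at_right 0)"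
      by (simp add: t00)
    have ev: "eventually (\<lambda>t::real. 1 / \<tau>t (complex_of_real t) = s (complex_of_real t) / complex_of_real t) (at_right 0)"
      unfolding eventually_at_right_field by (intro exI[of _ 1]) (auto simp: \<tau>t_def)
    show ?thesis using l tendsto_cong[OF ev] by simp
  qed
  have sreal: "Im (s (complex_of_real t)) = 0" if "0 < t" "t < R" for t
  proof (rule real_ode_real[where v = Vr and R = R and L = "1 / \<tau>0"])
    show "\<And>t. 0 < t \<Longrightarrow> t < R \<Longrightarrow> ((\<lambda>t. s (complex_of_real t)) has_vector_derivative
              s (complex_of_real t) / complex_of_real (Vr t)) (at t)" by (rule du)
    show "\<And>t. 0 < t \<Longrightarrow> t < R \<Longrightarrow> s (complex_of_real t) \<noteq> 0" using snz Dreal by blast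
    show "\<And>t. 0 < t \<Longrightarrow> t < R \<Longrightarrow> Vr t \<noteq> 0" using Vrpos by (metis less_irrefl)
    show "((\<lambda>t. s (complex_of_real t) / complex_of_real t) \<longlongrightarrow> complex_of_real (1 / \<tau>0)) (at_right 0)"
      by (rule lim_s)
  qed (use t0pos R0 that in auto)
  define S where "S = (\<lambda>t. Re (s (complex_of_real t)))"
  have sS: "s (complex_of_real t) = complex_of_real (S t)" if "0 < t" "t < R" for t
    using sreal[OF that] by (simp add: S_def complex_eq_iff)
  have dS: "(S has_field_derivative S t / Vr t) (at t)" if "0 < t" "t < R" for t
    using has_field_derivative_Re[OF du[OF that]] by (simp add: S_def)
  have Snz: "S t \<noteq> 0" if "0 < t" "t < R" for t
    using snz[OF Dreal[OF that]] sS[OF that] by auto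
  have limS: "((\<lambda>t. S t / t) \<longlongrightarrow> 1 / \<tau>0) (at_right 0)"
    using tendsto_Re[OF lim_s] by (simp add: S_def)
  have Spos: "S t > 0" if "0 < t" "t < R" for t
    by (rule real_ode_pos[OF dS Snz limS _ that]) (use t0pos in auto)
  have Smono: "S t1 < S t2" if "0 < t1" "t1 < t2" "t2 < R" for t1 t2
  proof (rule DERIV_pos_imp_increasing[OF that(2)])
    fix x assume "t1 \<le> x" "x \<le> t2"
    hence x: "0 < x" "x < R" using that by auto
    show "\<exists>y. (S has_field_derivative y) (at x) \<and> 0 < y"
      using dS[OF x] Spos[OF x] Vrpos[OF x] by auto
  qed
  have S0: "(S \<longlongrightarrow> 0) (at_right 0)"
  proof -
    have "((\<lambda>t. S t / t * t) \<longlongrightarrow> 1 / \<tau>0 * 0) (at_right 0)"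
      by (intro tendsto_mult limS) (simp add: tendsto_ident_at[THEN Lim_at_imp_Lim_at_within] filterlim_at_split)
    moreover have "eventually (\<lambda>t. S t / t * t = S t) (at_right (0::real))"
      unfolding eventually_at_right_field by (intro exI[of _ 1]) auto
    ultimately show ?thesis by (simp add: tendsto_cong)
  qed
  define g where "g = (\<lambda>w. \<Sum>k. c k * w ^ k)"
  have gder: "(g has_field_derivative (\<Sum>k. diffs c k * w ^ k)) (at w)" if "ereal (norm w) < \<rho>" for w
    unfolding g_def using has_field_derivative_powser[of w c UNIV] that crc by simp
  have ghol: "g holomorphic_on eball 0 \<rho>"
  proof -
    have "\<forall>w\<in>eball 0 \<rho>. \<exists>f'. (g has_field_derivative f') (at w)"
      using gder by (auto simp: in_eball_iff dist_norm intro!: exI)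
    thus ?thesis by (simp add: holomorphic_on_open[OF open_eball])
  qed
  have ident: "\<exists>C. open C \<and> complex_of_real ` {0<..<T} \<subseteq> C \<and> C \<subseteq> D - {0} \<and> (\<forall>z\<in>C. g (s z) = b z)"
    if T: "0 < T" "T \<le> R" "\<And>t. 0 < t \<Longrightarrow> t < T \<Longrightarrow> ereal (S t) < \<rho>" for T
  proof -
    define Om where "Om = s -` eball 0 \<rho> \<inter> (D - {0})"
    have openOm: "open Om"
      using continuous_on_open_vimage[OF openD0, of s] holomorphic_on_imp_continuous_on[OF shol]
      by (simp add: Om_def)
    define seg where "seg = complex_of_real ` {0<..<T}"
    have segOm: "seg \<subseteq> Om"
    proof
      fix z assume "z \<in> seg"
      then obtain t where t: "0 < t" "t < T" "z = complex_of_real t" by (auto simp: seg_def)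
      have tR: "t < R" using t T by simp
      have "ereal (norm (s z)) < \<rho>" using sS[OF t(1) tR] Spos[OF t(1) tR] T(3)[OF t(1,2)] t(3) by simp
      thus "z \<in> Om" using Dreal[OF t(1) tR] t(3) by (auto simp: Om_def in_eball_iff dist_norm)
    qed
    have conseg: "connected seg"
      unfolding seg_def by (intro connected_continuous_image continuous_intros) simp
    define \<xi>r where "\<xi>r = min \<epsilon>' T / 2"
    have xir: "0 < \<xi>r" "\<xi>r < T" "\<xi>r \<le> \<epsilon>' / 2" using eps' T by (auto simp: \<xi>r_def)
    define \<xi> where "\<xi> = complex_of_real \<xi>r"
    have xiseg: "\<xi> \<in> seg" using xir by (simp add: seg_def \<xi>_def)
    define C where "C = connected_component_set Om \<xi>"
    have segC: "seg \<subseteq> C" unfolding C_def by (rule connected_component_maximal[OF xiseg conseg segOm])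
    have openC: "open C" unfolding C_def by (rule open_connected_component[OF openOm])
    have connC: "connected C" unfolding C_def by simp
    have COm: "C \<subseteq> Om" unfolding C_def by (rule connected_component_subset)
    have sholO: "s holomorphic_on Om" by (rule holomorphic_on_subset[OF shol]) (auto simp: Om_def)
    have gsholO: "(g \<circ> s) holomorphic_on Om"
      by (rule holomorphic_on_compose_gen[OF sholO ghol]) (auto simp: Om_def)
    have bholO: "b holomorphic_on Om" by (rule holomorphic_on_subset[OF bhol]) (auto simp: Om_def)
    have hhol: "(\<lambda>z. g (s z) - b z) holomorphic_on C"
      using holomorphic_on_subset[OF gsholO COm] holomorphic_on_subset[OF bholO COm]
      by (auto intro!: holomorphic_intros simp: o_def)
    obtain \<delta> where \<delta>: "\<delta> > 0" "ball \<xi> \<delta> \<subseteq> C" using openC xiseg segC open_contains_ball_eq by blast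
    define U where "U = ball \<xi> (min \<delta> (\<xi>r / 2))"
    have UC: "U \<subseteq> C" using \<delta> by (auto simp: U_def)
    have hU: "g (s z) - b z = 0" if "z \<in> U" for z
    proof -
      have d: "norm (z - \<xi>) < \<xi>r / 2" using that by (auto simp: U_def dist_norm norm_minus_commute)
      have nx: "norm \<xi> = \<xi>r" using xir by (simp add: \<xi>_def)
      have "norm z \<le> norm \<xi> + norm (z - \<xi>)" using norm_triangle_ineq[of \<xi> "z - \<xi>"] by simp
      hence z1: "norm z < \<epsilon>'" using d nx xir by linarith
      have "norm \<xi> \<le> norm z + norm (z - \<xi>)" using norm_triangle_ineq[of z "\<xi> - z"] by (simp add: norm_minus_commute)
      hence "norm z > 0" using d nx xir by linarith
      hence z0: "z \<noteq> 0" by auto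
      show ?thesis using expand[OF z0 z1] by (simp add: g_def c_def sums_iff)
    qed
    have lp: "\<xi> islimpt U" using \<delta> xir by (simp add: U_def islimpt_ball)
    have "\<forall>w\<in>C. g (s w) - b w = 0"
      using analytic_continuation[OF hhol openC connC UC _ lp hU] xiseg segC by blast
    hence "\<forall>z\<in>C. g (s z) = b z" by simp
    moreover have "C \<subseteq> D - {0}" using COm by (auto simp: Om_def)
    ultimately show ?thesis using openC segC by (auto simp: seg_def)
  qed
  have Scont: "continuous_on {u..v} S" if "0 < u" "v < R" for u v
  proof (intro continuous_at_imp_continuous_on ballI)
    fix x assume "x \<in> {u..v}"
    hence "0 < x" "x < R" using that by auto
    thus "isCont S x" using dS DERIV_isCont by blast
  qed
  have Srad: "ereal (S t) < \<rho>" if t: "0 < t" "t < R" for t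
  proof (rule ccontr)
    assume "\<not> ereal (S t) < \<rho>"
    hence ge: "\<rho> \<le> ereal (S t)" by simp
    obtain \<rho>r where \<rho>r: "\<rho> = ereal \<rho>r" using ge crpos by (cases \<rho>) auto
    have rpos: "\<rho>r > 0" using crpos \<rho>r by simp
    have rle: "\<rho>r \<le> S t" using ge \<rho>r by simp
    have "eventually (\<lambda>x. S x < \<rho>r) (at_right 0)" using order_tendstoD(2)[OF S0 rpos] .
    moreover have "eventually (\<lambda>x::real. 0 < x \<and> x < t) (at_right 0)"
      unfolding eventually_at_right_field by (intro exI[of _ t]) (use t in auto)
    ultimately have "eventually (\<lambda>x. S x < \<rho>r \<and> 0 < x \<and> x < t) (at_right 0)"
      by eventually_elim auto
    then obtain t0 where t0: "S t0 < \<rho>r" "0 < t0" "t0 < t"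
      using eventually_happens'[OF trivial_limit_at_right_real] by blast
    obtain T where T: "t0 \<le> T" "T \<le> t" "S T = \<rho>r"
      using IVT'[of S t0 \<rho>r t] t0 rle Scont[of t0 t] t by auto
    have Tpos: "0 < T" "T < R" using T t0 t by auto
    have below: "ereal (S x) < \<rho>" if "0 < x" "x < T" for x
      using Smono[of x T] that Tpos T(3) \<rho>r by simp
    obtain C where C: "open C" "complex_of_real ` {0<..<T} \<subseteq> C" "C \<subseteq> D - {0}"
      "\<forall>z\<in>C. g (s z) = b z"
      using ident[of T] Tpos below by auto
    define T' where "T' = complex_of_real T"
    have T'D: "T' \<in> D - {0}" using Dreal[OF Tpos] by (simp add: T'_def)
    have dsT: "deriv s T' \<noteq> 0"
      using DERIV_imp_deriv[OF sder[OF T'D]] snz[OF T'D] Vnz[OF T'D] by simp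
    obtain \<delta>1 where \<delta>1: "\<delta>1 > 0" "ball T' \<delta>1 \<subseteq> D - {0}" "inj_on s (ball T' \<delta>1)"
    proof (rule has_complex_derivative_locally_injective[OF shol T'D openD0 dsT])
      fix r assume "0 < r" "ball T' r \<subseteq> D - {0}" "inj_on s (ball T' r)"
      then show thesis by (rule that)
    qed
    have sholb: "s holomorphic_on ball T' \<delta>1" using holomorphic_on_subset[OF shol \<delta>1(2)] .
    obtain \<sigma>i where \<sigma>i: "\<sigma>i holomorphic_on s ` ball T' \<delta>1" "\<And>z. z \<in> ball T' \<delta>1 \<Longrightarrow> \<sigma>i (s z) = z"
    proof (rule holomorphic_has_inverse[OF sholb open_ball \<delta>1(3)])
      fix h assume "h holomorphic_on s ` ball T' \<delta>1" "\<And>z. z \<in> ball T' \<delta>1 \<Longrightarrow> h (s z) = z"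
      then show thesis by (intro that) auto
    qed
    have openim: "open (s ` ball T' \<delta>1)" by (rule open_mapping_thm3[OF sholb open_ball \<delta>1(3)])
    have sT': "s T' = complex_of_real \<rho>r" using sS[OF Tpos] T(3) by (simp add: T'_def)
    have "complex_of_real \<rho>r \<in> s ` ball T' \<delta>1" using \<delta>1(1) sT' by (metis centre_in_ball imageI)
    then obtain \<epsilon>1 where \<epsilon>1: "\<epsilon>1 > 0" "ball (complex_of_real \<rho>r) \<epsilon>1 \<subseteq> s ` ball T' \<delta>1"
      using openim open_contains_ball_eq by blast
    define F where "F = (\<lambda>w. b (\<sigma>i w))"
    have \<sigma>im: "\<sigma>i ` (s ` ball T' \<delta>1) \<subseteq> D"
      using \<sigma>i(2) \<delta>1(2) by auto
    have Fhol: "F holomorphic_on ball (complex_of_real \<rho>r) \<epsilon>1"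
    proof -
      have "(b \<circ> \<sigma>i) holomorphic_on s ` ball T' \<delta>1"
        by (rule holomorphic_on_compose_gen[OF \<sigma>i(1) bhol \<sigma>im])
      hence "(b \<circ> \<sigma>i) holomorphic_on ball (complex_of_real \<rho>r) \<epsilon>1"
        by (rule holomorphic_on_subset[OF _ \<epsilon>1(2)])
      thus ?thesis by (simp add: F_def o_def)
    qed
    define W where "W = ball 0 \<rho>r \<inter> ball (complex_of_real \<rho>r) \<epsilon>1"
    define \<delta>2 where "\<delta>2 = min (\<delta>1 / 2) (T / 2)"
    have \<delta>2: "0 < \<delta>2" "\<delta>2 < \<delta>1" "\<delta>2 < T" using \<delta>1 Tpos by (auto simp: \<delta>2_def)
    define tl where "tl = T - \<delta>2"
    have tl: "0 < tl" "tl < T" using \<delta>2 by (auto simp: tl_def)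
    have Stl: "S tl < \<rho>r" using Smono[of tl T] tl Tpos T(3) by simp
    define w0 where "w0 = max (\<rho>r - \<epsilon>1) (S tl)"
    have w0: "w0 < \<rho>r" "S tl \<le> w0" "\<rho>r - \<epsilon>1 \<le> w0" using Stl \<epsilon>1 by (auto simp: w0_def)
    define U where "U = complex_of_real ` {w0<..<\<rho>r}"
    have UW: "U \<subseteq> W"
    proof
      fix z assume "z \<in> U"
      then obtain w where w: "w0 < w" "w < \<rho>r" "z = complex_of_real w" by (auto simp: U_def)
      have "0 < w" using w w0 Spos[OF tl(1)] Tpos tl by (meson le_less_trans less_trans)
      thus "z \<in> W" using w w0 by (auto simp: W_def dist_norm simp flip: of_real_diff)
    qed
    have gU: "g z - F z = 0" if "z \<in> U" for z
    proof -
      obtain w where w: "w0 < w" "w < \<rho>r" "z = complex_of_real w" using \<open>z \<in> U\<close> by (auto simp: U_def)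
      obtain t' where t': "tl \<le> t'" "t' \<le> T" "S t' = w"
        using IVT'[of S tl w T] w w0 T(3) Scont[of tl T] tl Tpos by auto
      have t'T: "t' < T" using t' w T(3) by (cases "t' = T") auto
      have t'pos: "0 < t'" using t' tl by simp
      have t'R: "t' < R" using t'T Tpos by simp
      have st': "s (complex_of_real t') = z" using sS[OF t'pos t'R] t' w by simp
      have "complex_of_real t' \<in> ball T' \<delta>1"
        using t' \<delta>2 by (auto simp: T'_def dist_norm tl_def simp flip: of_real_diff)
      hence "\<sigma>i z = complex_of_real t'" using \<sigma>i(2) st' by blast
      hence "F z = b (complex_of_real t')" by (simp add: F_def)
      moreover have "g z = b (complex_of_real t')"
        using C(2,4) t'pos t'T st' by force
      ultimately show ?thesis by simp
    qed
    have Wsub: "W \<subseteq> eball 0 \<rho>" by (auto simp: W_def \<rho>r in_eball_iff dist_norm)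
    have hol: "(\<lambda>z. g z - F z) holomorphic_on W"
      using holomorphic_on_subset[OF ghol Wsub] holomorphic_on_subset[OF Fhol]
      by (intro holomorphic_intros) (auto simp: W_def)
    have openW: "open W" unfolding W_def by (intro open_Int open_ball)
    have connW: "connected W" by (simp add: W_def convex_connected convex_Int)
    define \<xi> where "\<xi> = complex_of_real ((w0 + \<rho>r) / 2)"
    have \<xi>U: "\<xi> islimpt U" unfolding \<xi>_def U_def by (rule islimpt_of_real_interval) (use w0 in auto)
    have \<xi>W: "\<xi> \<in> W"
    proof -
      have "(w0 + \<rho>r) / 2 > w0" "(w0 + \<rho>r) / 2 < \<rho>r" using w0 by auto
      hence "\<xi> \<in> U" unfolding \<xi>_def U_def by (intro imageI) simp
      thus ?thesis using UW by auto
    qed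
    have eqW: "F w = (\<Sum>k. complex_of_real (a k) * w ^ k)" if "w \<in> W" for w
      using analytic_continuation[OF hol openW connW UW \<xi>W \<xi>U gU that] by (simp add: g_def c_def)
    show False
      by (rule pringsheim_aux[OF nn _ rpos \<epsilon>1(1) Fhol eqW]) (use \<rho>r in \<open>auto simp: \<rho>_def W_def\<close>)
  qed
  obtain C where C: "open C" "complex_of_real ` {0<..<R} \<subseteq> C" "C \<subseteq> D - {0}" "\<forall>z\<in>C. g (s z) = b z"
    using ident[of R] R0 Srad by auto
  define P where "P = (\<lambda>y. \<Sum>k. a k * y ^ k)"
  define P1 where "P1 = (\<lambda>y. \<Sum>k. diffs a k * y ^ k)"
  have key: "P (S x) * x = P1 (S x) * S x \<and> b (complex_of_real x) = complex_of_real (P (S x))"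
    if x: "0 < x" "x < R" for x
  proof -
    define y where "y = S x"
    have ypos: "y > 0" using Spos[OF x] by (simp add: y_def)
    have yr: "ereal (norm y) < conv_radius a" using Srad[OF x] ypos by (simp add: y_def \<rho>_def)
    have yr1: "ereal (norm y) < conv_radius (diffs a)"
      using yr conv_radius_diffs[of a] by (auto intro: less_le_trans)
    have sum0: "summable (\<lambda>k. a k * y^k)" by (rule summable_in_conv_radius[OF yr])
    have sum1: "summable (\<lambda>k. diffs a k * y^k)" by (rule summable_in_conv_radius[OF yr1])
    have gy: "g (complex_of_real y) = complex_of_real (P y)"
    proof -
      have "g (complex_of_real y) = (\<Sum>k. complex_of_real (a k * y^k))" by (simp add: g_def c_def)
      also have "\<dots> = complex_of_real (P y)" unfolding P_def by (rule suminf_of_real[OF sum0, symmetric])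
      finally show ?thesis .
    qed
    have xC: "complex_of_real x \<in> C" using C(2) x by auto
    have sx: "s (complex_of_real x) = complex_of_real y" using sS[OF x] by (simp add: y_def)
    have bx: "b (complex_of_real x) = complex_of_real (P y)"
    proof -
      have "b (complex_of_real x) = g (s (complex_of_real x))" using C(4) xC by simp
      thus ?thesis using sx gy by simp
    qed
    have g1: "(g has_field_derivative complex_of_real (P1 y)) (at (complex_of_real y))"
    proof -
      have "(g has_field_derivative (\<Sum>k. diffs c k * (complex_of_real y) ^ k)) (at (complex_of_real y))"
        by (rule gder) (use yr in \<open>simp add: \<rho>_def\<close>)
      moreover have "(\<Sum>k. diffs c k * (complex_of_real y) ^ k) = complex_of_real (P1 y)"
      proof -
        have "(\<Sum>k. diffs c k * (complex_of_real y)^k) = (\<Sum>k. complex_of_real (diffs a k * y^k))"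
          by (simp add: c_def diffs_of_real)
        also have "\<dots> = complex_of_real (P1 y)" unfolding P1_def by (rule suminf_of_real[OF sum1, symmetric])
        finally show ?thesis .
      qed
      ultimately show ?thesis by simp
    qed
    have xD: "complex_of_real x \<in> D - {0}" by (rule Dreal[OF x])
    have d1: "((g \<circ> s) has_field_derivative complex_of_real (P1 y) * (s (complex_of_real x) / V (complex_of_real x)))
              (at (complex_of_real x))"
      by (rule DERIV_chain[OF _ sder[OF xD]]) (use g1 sx in simp)
    have d2: "(b has_field_derivative complex_of_real (P1 y) * (s (complex_of_real x) / V (complex_of_real x)))
              (at (complex_of_real x))"
      by (rule has_field_derivative_transform_within_open[OF d1 C(1) xC]) (use C(4) in simp)
    have e: "b (complex_of_real x) * complex_of_real x / V (complex_of_real x)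
             = complex_of_real (P1 y) * (s (complex_of_real x) / V (complex_of_real x))"
      using DERIV_unique[OF bder[OF xD] d2] .
    hence "b (complex_of_real x) * complex_of_real x = complex_of_real (P1 y) * s (complex_of_real x)"
      using Vnz[OF xD] by (simp add: field_simps)
    hence "complex_of_real (P y * x) = complex_of_real (P1 y * y)" using bx sx by simp
    hence "P y * x = P1 y * y" by (simp only: of_real_eq_iff)
    thus ?thesis using bx by (simp add: y_def)
  qed
  have a0pos: "a 0 > 0"
  proof -
    have "complex_of_real (a 0) = b 0" using Areal[of 0] A0 by simp
    moreover have "b 0 \<noteq> 0" using bnz D0 by blast
    ultimately have "a 0 \<noteq> 0" by auto
    thus ?thesis using nn[of 0] by simp
  qed
  have exj: "\<exists>j\<ge>1. a j > 0"
  proof (rule ccontr)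
    assume "\<not> (\<exists>j\<ge>1. a j > 0)"
    hence z: "a j = 0" if "j \<ge> 1" for j using nn[of j] that by force
    have da: "diffs a = (\<lambda>k. 0)" by (rule ext) (simp add: diffs_def z)
    define x where "x = R / 2"
    have x: "0 < x" "x < R" using R0 by (auto simp: x_def)
    have "P1 (S x) = 0" by (simp add: P1_def da)
    hence "P (S x) * x = 0" using key[OF x] by simp
    hence "P (S x) = 0" using x by simp
    hence "b (complex_of_real x) = 0" using key[OF x] by simp
    moreover have "b (complex_of_real x) \<noteq> 0" using bnz Dreal[OF x] by blast
    ultimately show False by simp
  qed
  then obtain j where j: "j \<ge> 1" "a j > 0" by blast
  have inj: "inj_on (psd_mean a) (psd_params a)" by (rule psd_mean_inj[OF nn a0pos j])
  have Sparams: "S x \<in> psd_params a" if "0 < x" "x < R" for x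
    using Spos[OF that] Srad[OF that] by (simp add: psd_params_def \<rho>_def)
  have meanS: "psd_mean a (S x) = x" if x: "0 < x" "x < R" for x
  proof -
    have "psd_mean a (S x) = S x * P1 (S x) / P (S x)"
      unfolding P_def P1_def by (rule psd_mean_formula) (use Spos[OF x] Srad[OF x] in \<open>simp_all add: \<rho>_def\<close>)
    moreover have "P (S x) \<noteq> 0"
    proof
      assume "P (S x) = 0"
      hence "b (complex_of_real x) = 0" using key[OF x] by simp
      thus False using bnz Dreal[OF x] by blast
    qed
    moreover have "P (S x) * x = P1 (S x) * S x" using key[OF x] by blast
    ultimately have "psd_mean a (S x) * P (S x) = x * P (S x)" by (simp add: field_simps)
    thus ?thesis using \<open>P (S x) \<noteq> 0\<close> by simp
  qed
  define f where "f = inv_into (psd_params a) (psd_mean a)"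
  have fS: "f x = S x" if "0 < x" "x < R" for x
    using inv_into_f_f[OF inj Sparams[OF that]] meanS[OF that] by (simp add: f_def)
  have part4: "\<forall>x::real. 0 < x \<and> x < R \<longrightarrow> x \<in> psd_mean a ` psd_params a \<and> Re (V (of_real x)) = psd_cov a x"
  proof (intro allI impI conjI)
    fix x :: real assume x: "0 < x \<and> x < R"
    hence x': "0 < x" "x < R" by auto
    show "x \<in> psd_mean a ` psd_params a" using meanS[OF x'] Sparams[OF x'] by (metis image_eqI)
    have df: "(f has_field_derivative S x / Vr x) (at x)"
      by (rule has_field_derivative_transform_within_open[OF dS[OF x'], of "{0<..<R}"]) (use x' fS in auto)
    have "deriv f x = S x / Vr x" by (rule DERIV_imp_deriv[OF df])
    hence "psd_cov a x = S x / (S x / Vr x)" using fS[OF x'] by (simp add: psd_cov_def f_def Let_def)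
    also have "\<dots> = Vr x" using Spos[OF x'] Vrpos[OF x'] by simp
    finally show "Re (V (of_real x)) = psd_cov a x" by (simp add: Vr_def)
  qed
  have nn': "\<forall>k. 0 \<le> a k" using nn by blast
  have cr': "conv_radius a > 0" using crpos by (simp add: \<rho>_def)
  show ?thesis using nn' cr' part3 part4 by blast
qed
end
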